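(* Let $(H,\cdot,1,\Delta,\epsilon,S,\rightharpoonup)$ be a Yetter--Drinfeld post-Hopf algebra with subadjacent Hopf algebra $H_\rightharpoonup=(H,\bullet_\rightharpoonup,1,\Delta,\epsilon,S_\rightharpoonup)$. Then $H$, with left $H_\rightharpoonup$-action $\rightharpoonup$ and left $H_\rightharpoonup$-coaction $\mathrm{Ad}_L(a)=(a_1\bullet_\rightharpoonup S_\rightharpoonup(a_3))\otimes a_2$, is a left-left Yetter--Drinfeld module over $H_\rightharpoonup$; moreover $(H,\cdot,1,\Delta,\epsilon,S)$ is a Hopf monoid in the braided monoidal category ${}^{H_\rightharpoonup}_{H_\rightharpoonup}\mathcal{YD}$ of left-left Yetter--Drinfeld modules over $H_\rightharpoonup$. The braiding on $H\otimes H$ is $a\otimes b\mapsto \alpha_\rightharpoonup(a_1)\big(\beta_\rightharpoonup(a_3)(b)\big)\otimes a_2$.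
   Context: Conventions: $\Bbbk$ is a field; algebras are associative unital, coalgebras coassociative counital; Sweedler notation $\Delta(c)=c_1\otimes c_2$ (summation omitted), iterated as $c_1\otimes c_2\otimes c_3$ etc.; $H\otimes H$ carries the tensor product coalgebra structure. Definition (Yetter--Drinfeld post-Hopf algebra). A tuple $(H,\cdot,1,\Delta,\epsilon,S,\rightharpoonup)$ where $(H,\cdot,1)$ is an algebra, $(H,\Delta,\epsilon)$ is a coalgebra on the same vector space, $S:H\to H$ is linear with $x_1\cdot S(x_2)=S(x_1)\cdot x_2=\epsilon(x)1$ for all $x$, and $\rightharpoonup:H\otimes H\to H$ is a coalgebra morphism, such that for all $x,y,z\in H$: (P1) $x\rightharpoonup(y\cdot z)=(x_1\rightharpoonup y)\cdot(x_2\rightharpoonup z)$; (P2) $x\rightharpoonup(y\rightharpoonup z)=\big(x_1\cdot(x_2\rightharpoonup y)\big)\rightharpoonup z$; (P3) the map $\alpha_\rightharpoonup:H\to\mathrm{End}(H)$, $\alpha_\rightharpoonup(x)(y)=x\rightharpoonup y$, is convolution invertible, i.e. there is $\beta_\rightharpoonup:H\to\mathrm{End}(H)$ with $\alpha_\rightharpoonup(x_1)\circ\beta_\rightharpoonup(x_2)=\beta_\rightharpoonup(x_1)\circ\alpha_\rightharpoonup(x_2)=\epsilon(x)\mathrm{Id}_H$; (P4) $\epsilon(a\cdot b)=\epsilon(a)\epsilon(b)$, $\epsilon(1)=1_\Bbbk$, $\Delta(1)=1\otimes 1$; (P5) $\Delta(x\cdot y)=\Big(x_1\cdot\alpha_\rightharpoonup(x_2)\big(\beta_\rightharpoonup(x_4)(y_1)\big)\Big)\otimes(x_3\cdot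 y_2)$; (P6) setting $x\bullet_\rightharpoonup y:=x_1\cdot(x_2\rightharpoonup y)$, $S_\rightharpoonup(x):=\beta_\rightharpoonup(x_1)(S(x_2))$ and $x\leftharpoonup y:=\big(S_\rightharpoonup(x_1\rightharpoonup y_1)\bullet_\rightharpoonup x_2\big)\bullet_\rightharpoonup y_2$, one has $\Delta(S_\rightharpoonup(x))=S_\rightharpoonup(x_2)\otimes S_\rightharpoonup(x_1)$ and $(x_1\rightharpoonup y_1)\otimes(x_2\leftharpoonup y_2)=(x_2\rightharpoonup y_2)\otimes(x_1\leftharpoonup y_1)$. Fact: $H_\rightharpoonup=(H,\bullet_\rightharpoonup,1,\Delta,\epsilon,S_\rightharpoonup)$ is a Hopf algebra (the subadjacent Hopf algebra). Yetter--Drinfeld modules: for a Hopf algebra $A$ with antipode $T$, a left-left Yetter--Drinfeld module is a left $A$-module $(V,\triangleright)$ and left $A$-comodule $\rho(v)=v_{-1}\otimes v_0$ with $\rho(a\triangleright v)=a_1v_{-1}T(a_3)\otimes a_2\triangleright v_0$; these form the braided monoidal category ${}^A_A\mathcal{YD}$ (diagonal action and coaction on tensor products) with braiding $\sigma(v\otimes w)=v_{-1}\triangleright w\otimes v_0$. A bimonoid in ${}^A_A\mathcal{YD}$ is an object $K$ with algebra $(m,u)$ and coalgebra $(\Delta,\epsilon)$ structures whose structure maps are module and comodule morphisms, with $\epsilon$ and $u$ compatible ($\epsilon$ multiplicative, $\epsilon(1)=1$, $\Delta(1)=1\otimes1$) and $\Delta\circ m=(m\otimes m)(\mathrm{Id}\otimes\sigma\otimes\mathrm{Id})(\Delta\otimes\Delta)$;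 it is a Hopf monoid if moreover $\mathrm{Id}_K$ has a convolution inverse $S_K$ (the antipode). *)

theory Defs
  imports Complex_Main
begin

text \<open>An element of H (x) H is represented by a finite list of pairs (a finite sum of pure
  tensors; scalars are absorbed into the first factor); H (x) H (x) H likewise by lists
  of triples.  Two such representatives denote the same tensor iff all bilinear
  (resp. trilinear) forms into 'k agree on them (valid since 'k is a field).
  The coproduct is a map cop :: 'h => ('h * 'h) list, the Sweedler representative of
  Delta(x).\<close>

definition lin :: "('k::field \<Rightarrow> 'a::ab_group_add \<Rightarrow> 'a) \<Rightarrow> ('k \<Rightarrow> 'b::ab_group_add \<Rightarrow> 'b)
    \<Rightarrow> ('a \<Rightarrow> 'b) \<Rightarrow> bool" where
  "lin s1 s2 f \<longleftrightarrow> (\<forall>x y. f (x + y) = f x + f y) \<and> (\<forall>c x. f (s1 c x) = s2 c (f x))"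

definition bilin :: "('k::field \<Rightarrow> 'a::ab_group_add \<Rightarrow> 'a) \<Rightarrow> ('k \<Rightarrow> 'b::ab_group_add \<Rightarrow> 'b)
    \<Rightarrow> ('k \<Rightarrow> 'c::ab_group_add \<Rightarrow> 'c) \<Rightarrow> ('a \<Rightarrow> 'b \<Rightarrow> 'c) \<Rightarrow> bool" where
  "bilin s1 s2 s3 f \<longleftrightarrow> (\<forall>x. lin s2 s3 (f x)) \<and> (\<forall>y. lin s1 s3 (\<lambda>x. f x y))"

definition trilin :: "('k::field \<Rightarrow> 'h::ab_group_add \<Rightarrow> 'h) \<Rightarrow> ('h \<Rightarrow> 'h \<Rightarrow> 'h \<Rightarrow> 'k) \<Rightarrow> bool" where
  "trilin sc f \<longleftrightarrow> (\<forall>y z. lin sc (*) (\<lambda>x. f x y z)) \<and> (\<forall>x z. lin sc (*) (\<lambda>y. f x y z))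
     \<and> (\<forall>x y. lin sc (*) (\<lambda>z. f x y z))"

definition teq2 :: "('k::field \<Rightarrow> 'h::ab_group_add \<Rightarrow> 'h) \<Rightarrow> ('h \<times> 'h) list \<Rightarrow> ('h \<times> 'h) list \<Rightarrow> bool" where
  "teq2 sc s t \<longleftrightarrow> (\<forall>f :: 'h \<Rightarrow> 'h \<Rightarrow> 'k. bilin sc sc (*) f \<longrightarrow>
      sum_list (map (\<lambda>(a, b). f a b) s) = sum_list (map (\<lambda>(a, b). f a b) t))"

definition teq3 :: "('k::field \<Rightarrow> 'h::ab_group_add \<Rightarrow> 'h) \<Rightarrow> ('h \<times> 'h \<times> 'h) list \<Rightarrow> ('h \<times> 'h \<times> 'h) list \<Rightarrow> bool" where
  "teq3 sc s t \<longleftrightarrow> (\<forall>f :: 'h \<Rightarrow> 'h \<Rightarrow> 'h \<Rightarrow> 'k. trilin sc f \<longrightarrow>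
      sum_list (map (\<lambda>(a, b, c). f a b c) s) = sum_list (map (\<lambda>(a, b, c). f a b c) t))"

definition tlin2 :: "('k::field \<Rightarrow> 'h::ab_group_add \<Rightarrow> 'h) \<Rightarrow> ('h \<Rightarrow> ('h \<times> 'h) list) \<Rightarrow> bool" where
  "tlin2 sc F \<longleftrightarrow> (\<forall>x y. teq2 sc (F (x + y)) (F x @ F y))
     \<and> (\<forall>c x. teq2 sc (F (sc c x)) (map (\<lambda>(a, b). (sc c a, b)) (F x)))"

definition cop3 :: "('h \<Rightarrow> ('h \<times> 'h) list) \<Rightarrow> 'h \<Rightarrow> ('h \<times> 'h \<times> 'h) list" where
  "cop3 cop x = [(a1, a2, b). (a, b) \<leftarrow> cop x, (a1, a2) \<leftarrow> cop a]"

definition cop4 :: "('h \<Rightarrow> ('h \<times> 'h) list) \<Rightarrow> 'h \<Rightarrow> ('h \<times> 'h \<times> 'h \<times> 'h) list" where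
  "cop4 cop x = [(a1, a2, b, c). (a, b, c) \<leftarrow> cop3 cop x, (a1, a2) \<leftarrow> cop a]"

definition is_algebra :: "('k::field \<Rightarrow> 'h::ab_group_add \<Rightarrow> 'h) \<Rightarrow> ('h \<Rightarrow> 'h \<Rightarrow> 'h) \<Rightarrow> 'h \<Rightarrow> bool" where
  "is_algebra sc mul u \<longleftrightarrow> Vector_Spaces.vector_space sc \<and> bilin sc sc sc mul
     \<and> (\<forall>x y z. mul (mul x y) z = mul x (mul y z)) \<and> (\<forall>x. mul u x = x \<and> mul x u = x)"

definition is_coalgebra :: "('k::field \<Rightarrow> 'h::ab_group_add \<Rightarrow> 'h) \<Rightarrow> ('h \<Rightarrow> ('h \<times> 'h) list)
    \<Rightarrow> ('h \<Rightarrow> 'k) \<Rightarrow> bool" where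
  "is_coalgebra sc cop eps \<longleftrightarrow> Vector_Spaces.vector_space sc \<and> tlin2 sc cop \<and> lin sc (*) eps
     \<and> (\<forall>x. teq3 sc (cop3 cop x) [(a, b1, b2). (a, b) \<leftarrow> cop x, (b1, b2) \<leftarrow> cop b])
     \<and> (\<forall>x. sum_list (map (\<lambda>(a, b). sc (eps a) b) (cop x)) = x)
     \<and> (\<forall>x. sum_list (map (\<lambda>(a, b). sc (eps b) a) (cop x)) = x)"

definition swsum :: "('h \<Rightarrow> ('h \<times> 'h) list) \<Rightarrow> ('h \<Rightarrow> 'h \<Rightarrow> 'v::ab_group_add) \<Rightarrow> 'h \<Rightarrow> 'v" where
  "swsum cop f x = sum_list (map (\<lambda>(a, b). f a b) (cop x))"

definition bul :: "('h \<Rightarrow> 'h \<Rightarrow> 'h) \<Rightarrow> ('h \<Rightarrow> ('h \<times> 'h) list) \<Rightarrow> ('h \<Rightarrow> 'h \<Rightarrow> 'h)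
    \<Rightarrow> 'h \<Rightarrow> 'h \<Rightarrow> 'h::ab_group_add" where
  "bul mul cop hit x y = swsum cop (\<lambda>a b. mul a (hit b y)) x"

definition Sh :: "('h \<Rightarrow> ('h \<times> 'h) list) \<Rightarrow> ('h \<Rightarrow> 'h) \<Rightarrow> ('h \<Rightarrow> 'h \<Rightarrow> 'h) \<Rightarrow> 'h \<Rightarrow> 'h::ab_group_add" where
  "Sh cop S \<beta> x = swsum cop (\<lambda>a b. \<beta> a (S b)) x"

definition lhit :: "('h \<Rightarrow> 'h \<Rightarrow> 'h) \<Rightarrow> ('h \<Rightarrow> ('h \<times> 'h) list) \<Rightarrow> ('h \<Rightarrow> 'h) \<Rightarrow> ('h \<Rightarrow> 'h \<Rightarrow> 'h)
    \<Rightarrow> ('h \<Rightarrow> 'h \<Rightarrow> 'h) \<Rightarrow> 'h \<Rightarrow> 'h \<Rightarrow> 'h::ab_group_add" where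
  "lhit mul cop S hit \<beta> x y = swsum cop (\<lambda>x1 x2. swsum cop (\<lambda>y1 y2.
      bul mul cop hit (bul mul cop hit (Sh cop S \<beta> (hit x1 y1)) x2) y2) y) x"

text \<open>Yetter--Drinfeld post-Hopf algebra; \<beta> is the (unique) convolution inverse of \<alpha>.\<close>
definition yd_post_hopf :: "('k::field \<Rightarrow> 'h::ab_group_add \<Rightarrow> 'h) \<Rightarrow> ('h \<Rightarrow> 'h \<Rightarrow> 'h) \<Rightarrow> 'h
    \<Rightarrow> ('h \<Rightarrow> ('h \<times> 'h) list) \<Rightarrow> ('h \<Rightarrow> 'k) \<Rightarrow> ('h \<Rightarrow> 'h) \<Rightarrow> ('h \<Rightarrow> 'h \<Rightarrow> 'h)
    \<Rightarrow> ('h \<Rightarrow> 'h \<Rightarrow> 'h) \<Rightarrow> bool" where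
  "yd_post_hopf sc mul u cop eps S hit \<beta> \<longleftrightarrow>
     is_algebra sc mul u \<and> is_coalgebra sc cop eps \<and> lin sc sc S
     \<and> (\<forall>x. swsum cop (\<lambda>a b. mul a (S b)) x = sc (eps x) u)
     \<and> (\<forall>x. swsum cop (\<lambda>a b. mul (S a) b) x = sc (eps x) u)
     \<comment> \<open>\<rightharpoonup> is a coalgebra morphism H (x) H -> H\<close>
     \<and> bilin sc sc sc hit
     \<and> (\<forall>x y. teq2 sc (cop (hit x y)) [(hit x1 y1, hit x2 y2). (x1, x2) \<leftarrow> cop x, (y1, y2) \<leftarrow> cop y])
     \<and> (\<forall>x y. eps (hit x y) = eps x * eps y)
     \<comment> \<open>(P1)\<close>
     \<and> (\<forall>x y z. hit x (mul y z) = swsum cop (\<lambda>x1 x2. mul (hit x1 y) (hit x2 z)) x)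
     \<comment> \<open>(P2)\<close>
     \<and> (\<forall>x y z. hit x (hit y z) = hit (bul mul cop hit x y) z)
     \<comment> \<open>(P3): \<beta> : H -> End(H) linear, two-sided convolution inverse of \<alpha>\<close>
     \<and> bilin sc sc sc \<beta>
     \<and> (\<forall>x y. swsum cop (\<lambda>a b. hit a (\<beta> b y)) x = sc (eps x) y)
     \<and> (\<forall>x y. swsum cop (\<lambda>a b. \<beta> a (hit b y)) x = sc (eps x) y)
     \<comment> \<open>(P4)\<close>
     \<and> (\<forall>a b. eps (mul a b) = eps a * eps b) \<and> eps u = 1 \<and> teq2 sc (cop u) [(u, u)]
     \<comment> \<open>(P5)\<close>
     \<and> (\<forall>x y. teq2 sc (cop (mul x y))
          [(mul x1 (hit x2 (\<beta> x4 y1)), mul x3 y2). (x1, x2, x3, x4) \<leftarrow> cop4 cop x, (y1, y2) \<leftarrow> cop y])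
     \<comment> \<open>(P6)\<close>
     \<and> (\<forall>x. teq2 sc (cop (Sh cop S \<beta> x)) [(Sh cop S \<beta> b, Sh cop S \<beta> a). (a, b) \<leftarrow> cop x])
     \<and> (\<forall>x y. teq2 sc
          [(hit x1 y1, lhit mul cop S hit \<beta> x2 y2). (x1, x2) \<leftarrow> cop x, (y1, y2) \<leftarrow> cop y]
          [(hit x2 y2, lhit mul cop S hit \<beta> x1 y1). (x1, x2) \<leftarrow> cop x, (y1, y2) \<leftarrow> cop y])"

definition ll_yd_module :: "('k::field \<Rightarrow> 'h::ab_group_add \<Rightarrow> 'h) \<Rightarrow> ('h \<Rightarrow> 'h \<Rightarrow> 'h) \<Rightarrow> 'h
    \<Rightarrow> ('h \<Rightarrow> ('h \<times> 'h) list) \<Rightarrow> ('h \<Rightarrow> 'k) \<Rightarrow> ('h \<Rightarrow> 'h) \<Rightarrow> ('h \<Rightarrow> 'h \<Rightarrow> 'h)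
    \<Rightarrow> ('h \<Rightarrow> ('h \<times> 'h) list) \<Rightarrow> bool" where
  "ll_yd_module sc amul au acop aeps aT act coact \<longleftrightarrow>
     \<comment> \<open>left A-module\<close>
     bilin sc sc sc act
     \<and> (\<forall>a b v. act (amul a b) v = act a (act b v)) \<and> (\<forall>v. act au v = v)
     \<comment> \<open>left A-comodule\<close>
     \<and> tlin2 sc coact
     \<and> (\<forall>v. teq3 sc [(m1, m2, v0). (m, v0) \<leftarrow> coact v, (m1, m2) \<leftarrow> acop m]
                    [(m, n, w). (m, v0) \<leftarrow> coact v, (n, w) \<leftarrow> coact v0])
     \<and> (\<forall>v. sum_list (map (\<lambda>(m, v0). sc (aeps m) v0) (coact v)) = v)
     \<comment> \<open>Yetter--Drinfeld compatibility\<close>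
     \<and> (\<forall>a v. teq2 sc (coact (act a v))
          [(amul (amul a1 m) (aT a3), act a2 v0). (a1, a2, a3) \<leftarrow> cop3 acop a, (m, v0) \<leftarrow> coact v])"

text \<open>Hopf monoid in the braided category of left-left YD modules over A (data as above),
  with underlying YD module (H, act, coact); braiding sigma(v (x) w) = v_{-1} act w (x) v_0;
  diagonal action/coaction on tensor products; trivial structures on the unit object.\<close>
definition hopf_monoid_in_yd :: "('k::field \<Rightarrow> 'h::ab_group_add \<Rightarrow> 'h) \<Rightarrow> ('h \<Rightarrow> 'h \<Rightarrow> 'h) \<Rightarrow> 'h
    \<Rightarrow> ('h \<Rightarrow> ('h \<times> 'h) list) \<Rightarrow> ('h \<Rightarrow> 'k) \<Rightarrow> ('h \<Rightarrow> 'h \<Rightarrow> 'h) \<Rightarrow> ('h \<Rightarrow> ('h \<times> 'h) list)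
    \<Rightarrow> ('h \<Rightarrow> 'h \<Rightarrow> 'h) \<Rightarrow> 'h \<Rightarrow> ('h \<Rightarrow> ('h \<times> 'h) list) \<Rightarrow> ('h \<Rightarrow> 'k) \<Rightarrow> ('h \<Rightarrow> 'h) \<Rightarrow> bool" where
  "hopf_monoid_in_yd sc amul au acop aeps act coact mul u cop eps S \<longleftrightarrow>
     is_algebra sc mul u \<and> is_coalgebra sc cop eps
     \<comment> \<open>structure maps are module morphisms\<close>
     \<and> (\<forall>a x y. act a (mul x y) = swsum acop (\<lambda>a1 a2. mul (act a1 x) (act a2 y)) a)
     \<and> (\<forall>a. act a u = sc (aeps a) u)
     \<and> (\<forall>a x. teq2 sc (cop (act a x)) [(act a1 x1, act a2 x2). (a1, a2) \<leftarrow> acop a, (x1, x2) \<leftarrow> cop x])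
     \<and> (\<forall>a x. eps (act a x) = aeps a * eps x)
     \<comment> \<open>structure maps are comodule morphisms\<close>
     \<and> (\<forall>x y. teq2 sc (coact (mul x y)) [(amul m n, mul x0 y0). (m, x0) \<leftarrow> coact x, (n, y0) \<leftarrow> coact y])
     \<and> teq2 sc (coact u) [(au, u)]
     \<and> (\<forall>x. teq3 sc [(m, c1, c2). (m, c) \<leftarrow> coact x, (c1, c2) \<leftarrow> cop c]
                    [(amul m n, a0, b0). (a, b) \<leftarrow> cop x, (m, a0) \<leftarrow> coact a, (n, b0) \<leftarrow> coact b])
     \<and> (\<forall>x. sum_list (map (\<lambda>(m, c). sc (eps c) m) (coact x)) = sc (eps x) au)
     \<comment> \<open>compatibility of unit and counit\<close>
     \<and> (\<forall>a b. eps (mul a b) = eps a * eps b) \<and> eps u = 1 \<and> teq2 sc (cop u) [(u, u)]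
     \<comment> \<open>braided bimonoid axiom: Delta o m = (m (x) m)(Id (x) sigma (x) Id)(Delta (x) Delta)\<close>
     \<and> (\<forall>x y. teq2 sc (cop (mul x y))
          [(mul x1 (act m y1), mul x20 y2). (x1, x2) \<leftarrow> cop x, (m, x20) \<leftarrow> coact x2, (y1, y2) \<leftarrow> cop y])
     \<comment> \<open>antipode: a morphism in the category which is a convolution inverse of Id\<close>
     \<and> lin sc sc S
     \<and> (\<forall>a x. S (act a x) = act a (S x))
     \<and> (\<forall>x. teq2 sc (coact (S x)) [(m, S c). (m, c) \<leftarrow> coact x])
     \<and> (\<forall>x. swsum cop (\<lambda>a b. mul a (S b)) x = sc (eps x) u)
     \<and> (\<forall>x. swsum cop (\<lambda>a b. mul (S a) b) x = sc (eps x) u)"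

definition adL :: "('h \<Rightarrow> 'h \<Rightarrow> 'h) \<Rightarrow> ('h \<Rightarrow> ('h \<times> 'h) list) \<Rightarrow> ('h \<Rightarrow> 'h) \<Rightarrow> ('h \<Rightarrow> 'h \<Rightarrow> 'h)
    \<Rightarrow> ('h \<Rightarrow> 'h \<Rightarrow> 'h) \<Rightarrow> 'h \<Rightarrow> ('h \<times> 'h::ab_group_add) list" where
  "adL mul cop S hit \<beta> x =
     [(bul mul cop hit a1 (Sh cop S \<beta> a3), a2). (a1, a2, a3) \<leftarrow> cop3 cop x]"

end

theory Submission
  imports Defs
begin

lemma lin_zero: "lin s1 s2 f \<Longrightarrow> f 0 = 0"
  unfolding lin_def by (metis add_cancel_right_right add_0)

lemma lin_minus: "lin s1 s2 f \<Longrightarrow> f (a - b) = f a - f b"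
  unfolding lin_def by (metis add_diff_cancel diff_add_cancel)

lemma lin_sum_list: "lin s1 s2 f \<Longrightarrow> f (sum_list (map g xs)) = sum_list (map (\<lambda>x. f (g x)) xs)"
  by (induction xs) (auto simp: lin_zero, simp add: lin_def)

definition sep :: "('k::field \<Rightarrow> 'v::ab_group_add \<Rightarrow> 'v) \<Rightarrow> bool" where
  "sep s \<longleftrightarrow> Vector_Spaces.vector_space s \<and> (\<forall>v. v \<noteq> 0 \<longrightarrow> (\<exists>\<phi>. lin s (*) \<phi> \<and> \<phi> v \<noteq> 0))"

lemma sep_eq: assumes "sep s" "\<And>\<phi>. lin s (*) \<phi> \<Longrightarrow> \<phi> a = \<phi> b" shows "a = b"
proof (rule ccontr)
  assume "a \<noteq> b"
  then have "a - b \<noteq> 0" by simp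
  then obtain \<phi> where "lin s (*) \<phi>" "\<phi> (a - b) \<noteq> 0" using assms(1) unfolding sep_def by blast
  then show False using assms(2)[of \<phi>] lin_minus[of s "(*)" \<phi> a b] by simp
qed

lemma vs_k: "Vector_Spaces.vector_space ((*) :: 'k::field \<Rightarrow> 'k \<Rightarrow> 'k)"
  by unfold_locales (auto simp: algebra_simps)

lemma sep_k: "sep ((*) :: 'k::field \<Rightarrow> 'k \<Rightarrow> 'k)"
  unfolding sep_def using vs_k by (auto intro!: exI[of _ "\<lambda>x. x"] simp: lin_def)

lemma sep_vs: assumes vs: "Vector_Spaces.vector_space (s :: 'k::field \<Rightarrow> 'v::ab_group_add \<Rightarrow> 'v)"
  shows "sep s"
proof -
  interpret V: vector_space s by fact
  obtain B where B: "V.independent B" "UNIV \<subseteq> V.span B"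
    using V.basis_exists[of UNIV] by blast
  have spanU: "V.span B = UNIV" using B by auto
  have "\<exists>\<phi>. lin s (*) \<phi> \<and> \<phi> v \<noteq> 0" if "v \<noteq> 0" for v
  proof (rule ccontr)
    assume "\<not> ?thesis"
    moreover have "lin s (*) (\<lambda>v. V.representation B v b)" for b
      using V.linear_representation[OF B(1) spanU, of b] unfolding Vector_Spaces.linear_iff lin_def by auto
    ultimately have z: "V.representation B v b = 0" for b by blast
    have "v = (\<Sum>b | V.representation B v b \<noteq> 0. s (V.representation B v b) b)"
      using V.sum_nonzero_representation_eq[OF B(1), of v] spanU by auto
    also have "\<dots> = 0" using z by simp
    finally show False using that by simp
  qed
  then show ?thesis using vs unfolding sep_def by blast
qed

lemma lin_comp: "lin s1 s2 g \<Longrightarrow> lin s2 s3 h \<Longrightarrow> lin s1 s3 (\<lambda>z. h (g z))"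
  unfolding lin_def by simp

lemma lin_sum_list_fun:
  assumes vs: "Vector_Spaces.vector_space s2" and l: "\<And>p. lin s1 s2 (\<lambda>z. G z p)"
  shows "lin s1 s2 (\<lambda>z. sum_list (map (G z) xs))"
proof -
  interpret V: vector_space s2 by fact
  show ?thesis
  proof (induction xs)
    case Nil then show ?case by (simp add: lin_def V.scale_zero_right)
  next
    case (Cons p xs)
    then show ?case using l[of p] unfolding lin_def by (simp add: algebra_simps V.scale_right_distrib)
  qed
qed

definition swsum2 :: "('h \<Rightarrow> ('h \<times> 'h) list) \<Rightarrow> ('h \<Rightarrow> 'h \<Rightarrow> 'v::ab_group_add) \<Rightarrow> 'h \<Rightarrow> 'v" where
  "swsum2 = swsum"

lemma swsum_pull: "lin s1 s2 g \<Longrightarrow> g (swsum cop F x) = swsum cop (\<lambda>a b. g (F a b)) x"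
  unfolding swsum_def by (simp add: lin_sum_list split_def)

lemma swsum2_pull: "lin s1 s2 g \<Longrightarrow> g (swsum2 cop F x) = swsum2 cop (\<lambda>a b. g (F a b)) x"
  unfolding swsum2_def by (rule swsum_pull)

lemma sum_list_swap: fixes f :: "'a \<Rightarrow> 'b \<Rightarrow> 'c::comm_monoid_add" shows "sum_list (map (\<lambda>a. sum_list (map (\<lambda>b. f a b) ys)) xs) = sum_list (map (\<lambda>b. sum_list (map (\<lambda>a. f a b) xs)) ys)"
proof (induction xs)
  case Nil then show ?case by (induction ys) auto
next
  case (Cons x xs)
  have "sum_list (map (\<lambda>b. f x b + sum_list (map (\<lambda>a. f a b) xs)) ys) = sum_list (map (f x) ys) + sum_list (map (\<lambda>b. sum_list (map (\<lambda>a. f a b) xs)) ys)"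
    by (induction ys) (auto simp: add_ac)
  with Cons show ?case by simp
qed

lemma swsum_fubini: "swsum cop (\<lambda>a b. swsum2 cop' (\<lambda>c d. F a b c d) y) x = swsum2 cop' (\<lambda>c d. swsum cop (\<lambda>a b. F a b c d) x) y"
  unfolding swsum2_def swsum_def
  using sum_list_swap[of "\<lambda>p q. (case p of (a,b) \<Rightarrow> case q of (c,d) \<Rightarrow> F a b c d)" "cop' y" "cop x"]
  by (simp add: split_def)

lemma swsum_lin_out: "Vector_Spaces.vector_space s2 \<Longrightarrow> (\<And>a b. lin s1 s2 (\<lambda>z. F z a b)) \<Longrightarrow> lin s1 s2 (\<lambda>z. swsum cop (F z) c)"
  unfolding swsum_def by (rule lin_sum_list_fun) (auto simp: case_prod_beta)

lemma swsum2_lin_out: "Vector_Spaces.vector_space s2 \<Longrightarrow> (\<And>a b. lin s1 s2 (\<lambda>z. F z a b)) \<Longrightarrow> lin s1 s2 (\<lambda>z. swsum2 cop (F z) c)"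
  unfolding swsum2_def by (rule swsum_lin_out)

lemma swsum_add: "swsum cop (\<lambda>a b. F a b + G a b) x = swsum cop F x + swsum cop G x"
  unfolding swsum_def by (simp add: split_def sum_list_addf)

lemma sum_list_map_concat: "sum_list (map f (concat xss)) = sum_list (map (\<lambda>xs. sum_list (map f xs)) xss)"
  by (induction xss) auto

locale ydph =
  fixes sc :: "'k::field \<Rightarrow> 'h::ab_group_add \<Rightarrow> 'h"
    and mul :: "'h \<Rightarrow> 'h \<Rightarrow> 'h" and u :: 'h
    and cop :: "'h \<Rightarrow> ('h \<times> 'h) list" and eps :: "'h \<Rightarrow> 'k"
    and S :: "'h \<Rightarrow> 'h" and hit :: "'h \<Rightarrow> 'h \<Rightarrow> 'h" and \<beta> :: "'h \<Rightarrow> 'h \<Rightarrow> 'h"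
  assumes yd: "yd_post_hopf sc mul u cop eps S hit \<beta>"
begin

abbreviation D where "D \<equiv> swsum cop"
abbreviation E where "E \<equiv> swsum2 cop"

lemma alg: "is_algebra sc mul u" using yd unfolding yd_post_hopf_def by blast
lemma coalg: "is_coalgebra sc cop eps" using yd unfolding yd_post_hopf_def by blast
lemma VS: "Vector_Spaces.vector_space sc" using alg unfolding is_algebra_def by blast
lemma bil_mul: "bilin sc sc sc mul" using alg unfolding is_algebra_def by blast
lemma mul_assoc: "mul (mul x y) z = mul x (mul y z)" using alg unfolding is_algebra_def by blast
lemma mul_u[simp]: "mul u x = x" "mul x u = x" using alg unfolding is_algebra_def by blast+
lemma tlin_cop: "tlin2 sc cop" using coalg unfolding is_coalgebra_def by blast
lemma lin_eps: "lin sc (*) eps" using coalg unfolding is_coalgebra_def by blast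
lemma coassoc: "teq3 sc (cop3 cop x) [(a, b1, b2). (a, b) \<leftarrow> cop x, (b1, b2) \<leftarrow> cop b]"
  using coalg unfolding is_coalgebra_def by blast
lemma counitL0: "sum_list (map (\<lambda>(a, b). sc (eps a) b) (cop x)) = x"
  using coalg unfolding is_coalgebra_def by blast
lemma counitR0: "sum_list (map (\<lambda>(a, b). sc (eps b) a) (cop x)) = x"
  using coalg unfolding is_coalgebra_def by blast
lemma lin_S: "lin sc sc S" using yd unfolding yd_post_hopf_def by blast
lemma antiR: "D (\<lambda>a b. mul a (S b)) x = sc (eps x) u" using yd unfolding yd_post_hopf_def by fast
lemma antiL: "D (\<lambda>a b. mul (S a) b) x = sc (eps x) u" using yd unfolding yd_post_hopf_def by fast
lemma bil_hit: "bilin sc sc sc hit" using yd unfolding yd_post_hopf_def by blast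
lemma cop_hit: "teq2 sc (cop (hit x y)) [(hit x1 y1, hit x2 y2). (x1, x2) \<leftarrow> cop x, (y1, y2) \<leftarrow> cop y]"
  using yd unfolding yd_post_hopf_def by fast
lemma eps_hit: "eps (hit x y) = eps x * eps y" using yd unfolding yd_post_hopf_def by blast
lemma P1: "hit x (mul y z) = D (\<lambda>x1 x2. mul (hit x1 y) (hit x2 z)) x"
  using yd unfolding yd_post_hopf_def by blast
lemma P2: "hit x (hit y z) = hit (bul mul cop hit x y) z" using yd unfolding yd_post_hopf_def by blast
lemma bil_beta: "bilin sc sc sc \<beta>" using yd unfolding yd_post_hopf_def by blast
lemma P3a: "D (\<lambda>a b. hit a (\<beta> b y)) x = sc (eps x) y" using yd unfolding yd_post_hopf_def by fast
lemma P3b: "D (\<lambda>a b. \<beta> a (hit b y)) x = sc (eps x) y" using yd unfolding yd_post_hopf_def by fast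
lemma eps_mul: "eps (mul a b) = eps a * eps b" using yd unfolding yd_post_hopf_def by blast
lemma eps_u[simp]: "eps u = 1" using yd unfolding yd_post_hopf_def by blast
lemma cop_u: "teq2 sc (cop u) [(u, u)]" using yd unfolding yd_post_hopf_def by blast
lemma P5: "teq2 sc (cop (mul x y))
          [(mul x1 (hit x2 (\<beta> x4 y1)), mul x3 y2). (x1, x2, x3, x4) \<leftarrow> cop4 cop x, (y1, y2) \<leftarrow> cop y]"
  using yd unfolding yd_post_hopf_def by blast
lemma P6a: "teq2 sc (cop (Sh cop S \<beta> x)) [(Sh cop S \<beta> b, Sh cop S \<beta> a). (a, b) \<leftarrow> cop x]"
  using yd unfolding yd_post_hopf_def by blast
lemma P6b: "teq2 sc
          [(hit x1 y1, lhit mul cop S hit \<beta> x2 y2). (x1, x2) \<leftarrow> cop x, (y1, y2) \<leftarrow> cop y]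
          [(hit x2 y2, lhit mul cop S hit \<beta> x1 y1). (x1, x2) \<leftarrow> cop x, (y1, y2) \<leftarrow> cop y]"
  using yd unfolding yd_post_hopf_def by blast

lemma sepH: "sep sc" by (rule sep_vs[OF VS])
lemmas sepK = sep_k
lemma vsK: "Vector_Spaces.vector_space ((*) :: 'k \<Rightarrow> 'k \<Rightarrow> 'k)" by (rule vs_k)

lemma sep_vs': "sep s \<Longrightarrow> Vector_Spaces.vector_space s" unfolding sep_def by blast

lemma lin_scale: "Vector_Spaces.vector_space s \<Longrightarrow> lin s s (s c)"
  unfolding lin_def vector_space_def by (metis mult.commute)

lemma TEQ2:
  assumes t: "teq2 sc xs ys" and s: "sep s2"
    and f1: "\<And>b. lin sc s2 (\<lambda>a. f a b)" and f2: "\<And>a. lin sc s2 (\<lambda>b. f a b)"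
  shows "sum_list (map (\<lambda>(a, b). f a b) xs) = sum_list (map (\<lambda>(a, b). f a b) ys)"
proof (rule sep_eq[OF s])
  fix \<phi> assume \<phi>: "lin s2 (*) \<phi>"
  have "bilin sc sc (*) (\<lambda>a b. \<phi> (f a b))"
    unfolding bilin_def using lin_comp[OF f1 \<phi>] lin_comp[OF f2 \<phi>] by blast
  then have "sum_list (map (\<lambda>(a, b). \<phi> (f a b)) xs) = sum_list (map (\<lambda>(a, b). \<phi> (f a b)) ys)"
    using t unfolding teq2_def by blast
  then show "\<phi> (sum_list (map (\<lambda>(a, b). f a b) xs)) = \<phi> (sum_list (map (\<lambda>(a, b). f a b) ys))"
    by (simp add: lin_sum_list[OF \<phi>] split_def)
qed

lemma TEQ3:
  assumes t: "teq3 sc xs ys" and s: "sep s2"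
    and f1: "\<And>b c. lin sc s2 (\<lambda>a. f a b c)" and f2: "\<And>a c. lin sc s2 (\<lambda>b. f a b c)"
    and f3: "\<And>a b. lin sc s2 (\<lambda>c. f a b c)"
  shows "sum_list (map (\<lambda>(a, b, c). f a b c) xs) = sum_list (map (\<lambda>(a, b, c). f a b c) ys)"
proof (rule sep_eq[OF s])
  fix \<phi> assume \<phi>: "lin s2 (*) \<phi>"
  have "trilin sc (\<lambda>a b c. \<phi> (f a b c))"
    unfolding trilin_def using lin_comp[OF f1 \<phi>] lin_comp[OF f2 \<phi>] lin_comp[OF f3 \<phi>] by blast
  then have "sum_list (map (\<lambda>(a, b, c). \<phi> (f a b c)) xs) = sum_list (map (\<lambda>(a, b, c). \<phi> (f a b c)) ys)"
    using t unfolding teq3_def by blast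
  then show "\<phi> (sum_list (map (\<lambda>(a, b, c). f a b c) xs)) = \<phi> (sum_list (map (\<lambda>(a, b, c). f a b c) ys))"
    by (simp add: lin_sum_list[OF \<phi>] split_def)
qed

lemma D_lin_in:
  assumes s: "sep s" and f1: "\<And>b. lin sc s (\<lambda>a. F a b)" and f2: "\<And>a. lin sc s (\<lambda>b. F a b)"
  shows "lin sc s (\<lambda>z. D F z)"
proof -
  have vs: "Vector_Spaces.vector_space s" using s by (rule sep_vs')
  have "D F (x + y) = D F x + D F y" for x y
    using TEQ2[OF conjunct1[OF tlin_cop[unfolded tlin2_def], rule_format, of x y] s f1 f2]
    by (simp add: swsum_def)
  moreover have "D F (sc c x) = s c (D F x)" for c x
  proof -
    have "D F (sc c x) = sum_list (map (\<lambda>(a, b). F a b) (map (\<lambda>(a, b). (sc c a, b)) (cop x)))"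
      using TEQ2[OF conjunct2[OF tlin_cop[unfolded tlin2_def], rule_format, of c x] s f1 f2]
      by (simp add: swsum_def)
    also have "\<dots> = sum_list (map (\<lambda>(a, b). s c (F a b)) (cop x))"
      using f1 unfolding lin_def by (simp add: split_def o_def)
    also have "\<dots> = s c (D F x)"
      unfolding swsum_def by (simp add: lin_sum_list[OF lin_scale[OF vs]] split_def)
    finally show ?thesis .
  qed
  ultimately show ?thesis unfolding lin_def by blast
qed

lemma E_lin_in:
  assumes s: "sep s" and f1: "\<And>b. lin sc s (\<lambda>a. F a b)" and f2: "\<And>a. lin sc s (\<lambda>b. F a b)"
  shows "lin sc s (\<lambda>z. E F z)"
  unfolding swsum2_def by (rule D_lin_in[OF assms])

lemma cop3_sum: "sum_list (map (\<lambda>(a, b, c). f a b c) (cop3 cop x)) = D (\<lambda>p c. D (\<lambda>a b. f a b c) p) x"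
  unfolding cop3_def swsum_def by (simp add: sum_list_map_concat split_def o_def)

lemma CA:
  assumes s: "sep s"
    and f1: "\<And>b c. lin sc s (\<lambda>a. F a b c)" and f2: "\<And>a c. lin sc s (\<lambda>b. F a b c)"
    and f3: "\<And>a b. lin sc s (\<lambda>c. F a b c)"
  shows "D (\<lambda>a b. D (\<lambda>c d. F c d b) a) x = D (\<lambda>a b. D (\<lambda>c d. F a c d) b) x"
  using TEQ3[OF coassoc s f1 f2 f3] unfolding cop3_sum
  by (simp add: swsum_def sum_list_map_concat split_def o_def)

lemma CU1: "lin sc s g \<Longrightarrow> D (\<lambda>a b. s (eps a) (g b)) x = g x"
proof -
  assume g: "lin sc s g"
  have "g x = g (sum_list (map (\<lambda>(a, b). sc (eps a) b) (cop x)))" by (simp add: counitL0)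
  also have "\<dots> = D (\<lambda>a b. s (eps a) (g b)) x"
    unfolding swsum_def by (simp add: lin_sum_list[OF g] split_def g[unfolded lin_def])
  finally show ?thesis by simp
qed

lemma CU2: "lin sc s g \<Longrightarrow> D (\<lambda>a b. s (eps b) (g a)) x = g x"
proof -
  assume g: "lin sc s g"
  have "g x = g (sum_list (map (\<lambda>(a, b). sc (eps b) a) (cop x)))" by (simp add: counitR0)
  also have "\<dots> = D (\<lambda>a b. s (eps b) (g a)) x"
    unfolding swsum_def by (simp add: lin_sum_list[OF g] split_def g[unfolded lin_def])
  finally show ?thesis by simp
qed

end

lemma bl1: "bilin s1 s2 s3 f \<Longrightarrow> lin s0 s1 g \<Longrightarrow> lin s0 s3 (\<lambda>z. f (g z) c)"
  unfolding bilin_def by (rule lin_comp[of _ _ g]) auto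
lemma bl2: "bilin s1 s2 s3 f \<Longrightarrow> lin s0 s2 g \<Longrightarrow> lin s0 s3 (\<lambda>z. f c (g z))"
  unfolding bilin_def by (rule lin_comp[of _ _ g]) auto
lemma lin_idI: "lin s s (\<lambda>z. z)" unfolding lin_def by simp

context ydph begin

lemma bil_bul: "bilin sc sc sc (bul mul cop hit)"
proof -
  have "lin sc sc (\<lambda>y. bul mul cop hit x y)" for x
    unfolding bul_def
    by (rule swsum_lin_out[OF VS]) (rule bl2[OF bil_mul], rule bl2[OF bil_hit], rule lin_idI)
  moreover have "lin sc sc (\<lambda>x. bul mul cop hit x y)" for y
    unfolding bul_def
    by (rule D_lin_in[OF sepH]) (auto intro: bl1[OF bil_mul lin_idI] bl2[OF bil_mul bl1[OF bil_hit lin_idI]])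
  ultimately show ?thesis unfolding bilin_def by blast
qed

lemma lin_Sh: "lin sc sc (Sh cop S \<beta>)"
proof -
  have "lin sc sc (\<lambda>x. D (\<lambda>a b. \<beta> a (S b)) x)"
    by (rule D_lin_in[OF sepH]) (rule bl1[OF bil_beta] bl2[OF bil_beta], rule lin_idI lin_S)+
  then show ?thesis unfolding Sh_def[abs_def] by simp
qed

abbreviation bu where "bu \<equiv> bul mul cop hit"
abbreviation T where "T \<equiv> Sh cop S \<beta>"

lemma L_id: "lin sc sc (\<lambda>z. z)" by (rule lin_idI)
lemma L_mul1: "lin sc sc g \<Longrightarrow> lin sc sc (\<lambda>z. mul (g z) c)" by (rule bl1[OF bil_mul])
lemma L_mul2: "lin sc sc g \<Longrightarrow> lin sc sc (\<lambda>z. mul c (g z))" by (rule bl2[OF bil_mul])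
lemma L_hit1: "lin sc sc g \<Longrightarrow> lin sc sc (\<lambda>z. hit (g z) c)" by (rule bl1[OF bil_hit])
lemma L_hit2: "lin sc sc g \<Longrightarrow> lin sc sc (\<lambda>z. hit c (g z))" by (rule bl2[OF bil_hit])
lemma L_beta1: "lin sc sc g \<Longrightarrow> lin sc sc (\<lambda>z. \<beta> (g z) c)" by (rule bl1[OF bil_beta])
lemma L_beta2: "lin sc sc g \<Longrightarrow> lin sc sc (\<lambda>z. \<beta> c (g z))" by (rule bl2[OF bil_beta])
lemma L_bul1: "lin sc sc g \<Longrightarrow> lin sc sc (\<lambda>z. bu (g z) c)" by (rule bl1[OF bil_bul])
lemma L_bul2: "lin sc sc g \<Longrightarrow> lin sc sc (\<lambda>z. bu c (g z))" by (rule bl2[OF bil_bul])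
lemma L_S: "lin sc sc g \<Longrightarrow> lin sc sc (\<lambda>z. S (g z))" by (rule lin_comp[OF _ lin_S])
lemma L_Sh: "lin sc sc g \<Longrightarrow> lin sc sc (\<lambda>z. T (g z))" by (rule lin_comp[OF _ lin_Sh])
lemma L_eps: "lin sc sc g \<Longrightarrow> lin sc (*) (\<lambda>z. eps (g z))" by (rule lin_comp[OF _ lin_eps])
lemma L_phi: "lin sc (*) \<phi> \<Longrightarrow> lin sc sc g \<Longrightarrow> lin sc (*) (\<lambda>z. \<phi> (g z))" by (rule lin_comp)
lemma L_sc: "lin sc sc g \<Longrightarrow> lin sc sc (\<lambda>z. sc c (g z))"
  by (rule lin_comp[OF _ lin_scale[OF VS]])
lemma L_sck: "lin sc (*) g \<Longrightarrow> lin sc sc (\<lambda>z. sc (g z) v)"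
  using VS unfolding lin_def vector_space_def by simp
lemma L_times1: "lin sc (*) g \<Longrightarrow> lin sc (*) (\<lambda>z. g z * c)"
  unfolding lin_def by (simp add: algebra_simps)
lemma L_times2: "lin sc (*) g \<Longrightarrow> lin sc (*) (\<lambda>z. c * g z)"
  unfolding lin_def by (simp add: algebra_simps)
lemma L_DoutH: "(\<And>a b. lin sc sc (\<lambda>z. F z a b)) \<Longrightarrow> lin sc sc (\<lambda>z. D (F z) c)"
  by (rule swsum_lin_out[OF VS])
lemma L_DoutK: "(\<And>a b. lin sc (*) (\<lambda>z. F z a b)) \<Longrightarrow> lin sc (*) (\<lambda>z. D (F z) c)"
  by (rule swsum_lin_out[OF vsK])
lemma L_EoutH: "(\<And>a b. lin sc sc (\<lambda>z. F z a b)) \<Longrightarrow> lin sc sc (\<lambda>z. E (F z) c)"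
  by (rule swsum2_lin_out[OF VS])
lemma L_EoutK: "(\<And>a b. lin sc (*) (\<lambda>z. F z a b)) \<Longrightarrow> lin sc (*) (\<lambda>z. E (F z) c)"
  by (rule swsum2_lin_out[OF vsK])
lemma L_DinH: "(\<And>b. lin sc sc (\<lambda>a. F a b)) \<Longrightarrow> (\<And>a. lin sc sc (\<lambda>b. F a b)) \<Longrightarrow> lin sc sc g \<Longrightarrow> lin sc sc (\<lambda>z. D F (g z))"
  by (rule lin_comp[OF _ D_lin_in[OF sepH]])
lemma L_DinK: "(\<And>b. lin sc (*) (\<lambda>a. F a b)) \<Longrightarrow> (\<And>a. lin sc (*) (\<lambda>b. F a b)) \<Longrightarrow> lin sc sc g \<Longrightarrow> lin sc (*) (\<lambda>z. D F (g z))"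
  by (rule lin_comp[OF _ D_lin_in[OF sepK]])
lemma L_EinH: "(\<And>b. lin sc sc (\<lambda>a. F a b)) \<Longrightarrow> (\<And>a. lin sc sc (\<lambda>b. F a b)) \<Longrightarrow> lin sc sc g \<Longrightarrow> lin sc sc (\<lambda>z. E F (g z))"
  by (rule lin_comp[OF _ E_lin_in[OF sepH]])
lemma L_EinK: "(\<And>b. lin sc (*) (\<lambda>a. F a b)) \<Longrightarrow> (\<And>a. lin sc (*) (\<lambda>b. F a b)) \<Longrightarrow> lin sc sc g \<Longrightarrow> lin sc (*) (\<lambda>z. E F (g z))"
  by (rule lin_comp[OF _ E_lin_in[OF sepK]])

lemmas LR = L_id L_mul1 L_mul2 L_hit1 L_hit2 L_beta1 L_beta2 L_bul1 L_bul2 L_S L_Sh L_eps L_sc L_sck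
  L_times1 L_times2 L_DoutH L_DoutK L_EoutH L_EoutK L_DinH L_DinK L_EinH L_EinK

lemma lin_kH: "lin (*) sc (\<lambda>k. sc k v)"
  using VS unfolding lin_def vector_space_def by simp
lemma lin_kk1: "lin (*) (*) (\<lambda>k::'k. k * c)" unfolding lin_def by (simp add: algebra_simps)
lemma lin_kk2: "lin (*) (*) (\<lambda>k::'k. c * k)" unfolding lin_def by (simp add: algebra_simps)

lemma sc_sc: "sc a (sc b v) = sc (a * b) v"
  using VS unfolding vector_space_def by simp
lemma sc_one[simp]: "sc 1 v = v"
  using VS unfolding vector_space_def by simp

lemmas pushD = swsum_pull[OF L_mul1[OF L_id]] swsum_pull[OF L_mul2[OF L_id]]
  swsum_pull[OF L_hit1[OF L_id]] swsum_pull[OF L_hit2[OF L_id]]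
  swsum_pull[OF L_beta1[OF L_id]] swsum_pull[OF L_beta2[OF L_id]]
  swsum_pull[OF L_bul1[OF L_id]] swsum_pull[OF L_bul2[OF L_id]]
  swsum_pull[OF lin_S] swsum_pull[OF lin_Sh] swsum_pull[OF lin_eps]
  swsum_pull[OF lin_kH]
lemmas pushE = swsum2_pull[OF L_mul1[OF L_id]] swsum2_pull[OF L_mul2[OF L_id]]
  swsum2_pull[OF L_hit1[OF L_id]] swsum2_pull[OF L_hit2[OF L_id]]
  swsum2_pull[OF L_beta1[OF L_id]] swsum2_pull[OF L_beta2[OF L_id]]
  swsum2_pull[OF L_bul1[OF L_id]] swsum2_pull[OF L_bul2[OF L_id]]
  swsum2_pull[OF lin_S] swsum2_pull[OF lin_Sh] swsum2_pull[OF lin_eps]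
  swsum2_pull[OF lin_kH]

lemmas pullsc = swsum_pull[OF lin_scale[OF VS], symmetric] swsum_pull[OF lin_kk2, symmetric]
  swsum2_pull[OF lin_scale[OF VS], symmetric] swsum2_pull[OF lin_kk2, symmetric]
lemma sc_mult: "sc (a * b) v = sc a (sc b v)" by (simp add: sc_sc)

lemma pushDD_H: "(\<And>b. lin sc sc (\<lambda>a. G a b)) \<Longrightarrow> (\<And>a. lin sc sc (\<lambda>b. G a b)) \<Longrightarrow> D G (D F x) = D (\<lambda>a b. D G (F a b)) x"
  by (rule swsum_pull[OF D_lin_in[OF sepH]])
lemma pushDD_K: "(\<And>b. lin sc (*) (\<lambda>a. G a b)) \<Longrightarrow> (\<And>a. lin sc (*) (\<lambda>b. G a b)) \<Longrightarrow> D G (D F x) = D (\<lambda>a b. D G (F a b)) x"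
  by (rule swsum_pull[OF D_lin_in[OF sepK]])
lemma pushDE_H: "(\<And>b. lin sc sc (\<lambda>a. G a b)) \<Longrightarrow> (\<And>a. lin sc sc (\<lambda>b. G a b)) \<Longrightarrow> D G (E F x) = E (\<lambda>a b. D G (F a b)) x"
  by (rule swsum2_pull[OF D_lin_in[OF sepH]])
lemma pushDE_K: "(\<And>b. lin sc (*) (\<lambda>a. G a b)) \<Longrightarrow> (\<And>a. lin sc (*) (\<lambda>b. G a b)) \<Longrightarrow> D G (E F x) = E (\<lambda>a b. D G (F a b)) x"
  by (rule swsum2_pull[OF D_lin_in[OF sepK]])
lemma pushED_H: "(\<And>b. lin sc sc (\<lambda>a. G a b)) \<Longrightarrow> (\<And>a. lin sc sc (\<lambda>b. G a b)) \<Longrightarrow> E G (D F x) = D (\<lambda>a b. E G (F a b)) x"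
  by (rule swsum_pull[OF E_lin_in[OF sepH]])
lemma pushED_K: "(\<And>b. lin sc (*) (\<lambda>a. G a b)) \<Longrightarrow> (\<And>a. lin sc (*) (\<lambda>b. G a b)) \<Longrightarrow> E G (D F x) = D (\<lambda>a b. E G (F a b)) x"
  by (rule swsum_pull[OF E_lin_in[OF sepK]])
lemma pushEE_H: "(\<And>b. lin sc sc (\<lambda>a. G a b)) \<Longrightarrow> (\<And>a. lin sc sc (\<lambda>b. G a b)) \<Longrightarrow> E G (E F x) = E (\<lambda>a b. E G (F a b)) x"
  by (rule swsum2_pull[OF E_lin_in[OF sepH]])
lemma pushEE_K: "(\<And>b. lin sc (*) (\<lambda>a. G a b)) \<Longrightarrow> (\<And>a. lin sc (*) (\<lambda>b. G a b)) \<Longrightarrow> E G (E F x) = E (\<lambda>a b. E G (F a b)) x"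
  by (rule swsum2_pull[OF E_lin_in[OF sepK]])

lemma lin_scaleD: "lin s1 s2 f \<Longrightarrow> f (s1 c v) = s2 c (f v)" unfolding lin_def by blast

lemmas scalars = lin_scaleD[OF L_mul1[OF L_id]] lin_scaleD[OF L_mul2[OF L_id]]
  lin_scaleD[OF L_hit1[OF L_id]] lin_scaleD[OF L_hit2[OF L_id]]
  lin_scaleD[OF L_beta1[OF L_id]] lin_scaleD[OF L_beta2[OF L_id]]
  lin_scaleD[OF L_bul1[OF L_id]] lin_scaleD[OF L_bul2[OF L_id]]
  lin_scaleD[OF lin_S] lin_scaleD[OF lin_Sh] lin_scaleD[OF lin_eps]

lemma scD_H: "(\<And>b. lin sc sc (\<lambda>a. G a b)) \<Longrightarrow> (\<And>a. lin sc sc (\<lambda>b. G a b)) \<Longrightarrow> D G (sc k v) = sc k (D G v)"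
  by (rule lin_scaleD[OF D_lin_in[OF sepH]])
lemma scD_K: "(\<And>b. lin sc (*) (\<lambda>a. G a b)) \<Longrightarrow> (\<And>a. lin sc (*) (\<lambda>b. G a b)) \<Longrightarrow> D G (sc k v) = k * (D G v)"
  by (rule lin_scaleD[OF D_lin_in[OF sepK]])
lemma scE_H: "(\<And>b. lin sc sc (\<lambda>a. G a b)) \<Longrightarrow> (\<And>a. lin sc sc (\<lambda>b. G a b)) \<Longrightarrow> E G (sc k v) = sc k (E G v)"
  by (rule lin_scaleD[OF E_lin_in[OF sepH]])
lemma scE_K: "(\<And>b. lin sc (*) (\<lambda>a. G a b)) \<Longrightarrow> (\<And>a. lin sc (*) (\<lambda>b. G a b)) \<Longrightarrow> E G (sc k v) = k * (E G v)"
  by (rule lin_scaleD[OF E_lin_in[OF sepK]])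

lemma CA_H: "(\<And>b c. lin sc sc (\<lambda>a. F a b c)) \<Longrightarrow> (\<And>a c. lin sc sc (\<lambda>b. F a b c)) \<Longrightarrow>
   (\<And>a b. lin sc sc (\<lambda>c. F a b c)) \<Longrightarrow> D (\<lambda>a b. D (\<lambda>c d. F c d b) a) x = D (\<lambda>a b. D (\<lambda>c d. F a c d) b) x"
  by (rule CA[OF sepH])
lemma CA_K: "(\<And>b c. lin sc (*) (\<lambda>a. F a b c)) \<Longrightarrow> (\<And>a c. lin sc (*) (\<lambda>b. F a b c)) \<Longrightarrow>
   (\<And>a b. lin sc (*) (\<lambda>c. F a b c)) \<Longrightarrow> D (\<lambda>a b. D (\<lambda>c d. F c d b) a) x = D (\<lambda>a b. D (\<lambda>c d. F a c d) b) x"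
  by (rule CA[OF sepK])
lemma CAE_H: "(\<And>b c. lin sc sc (\<lambda>a. F a b c)) \<Longrightarrow> (\<And>a c. lin sc sc (\<lambda>b. F a b c)) \<Longrightarrow>
   (\<And>a b. lin sc sc (\<lambda>c. F a b c)) \<Longrightarrow> E (\<lambda>a b. E (\<lambda>c d. F c d b) a) x = E (\<lambda>a b. E (\<lambda>c d. F a c d) b) x"
  unfolding swsum2_def by (rule CA[OF sepH])
lemma CAE_K: "(\<And>b c. lin sc (*) (\<lambda>a. F a b c)) \<Longrightarrow> (\<And>a c. lin sc (*) (\<lambda>b. F a b c)) \<Longrightarrow>
   (\<And>a b. lin sc (*) (\<lambda>c. F a b c)) \<Longrightarrow> E (\<lambda>a b. E (\<lambda>c d. F c d b) a) x = E (\<lambda>a b. E (\<lambda>c d. F a c d) b) x"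
  unfolding swsum2_def by (rule CA[OF sepK])

lemma CU1_H: "lin sc sc g \<Longrightarrow> D (\<lambda>a b. sc (eps a) (g b)) x = g x" by (rule CU1)
lemma CU2_H: "lin sc sc g \<Longrightarrow> D (\<lambda>a b. sc (eps b) (g a)) x = g x" by (rule CU2)
lemma CU1_K: "lin sc (*) g \<Longrightarrow> D (\<lambda>a b. eps a * g b) x = g x" by (rule CU1)
lemma CU2_K: "lin sc (*) g \<Longrightarrow> D (\<lambda>a b. eps b * g a) x = g x" by (rule CU2)
lemma CUE1_H: "lin sc sc g \<Longrightarrow> E (\<lambda>a b. sc (eps a) (g b)) x = g x" unfolding swsum2_def by (rule CU1)
lemma CUE2_H: "lin sc sc g \<Longrightarrow> E (\<lambda>a b. sc (eps b) (g a)) x = g x" unfolding swsum2_def by (rule CU2)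
lemma CUE1_K: "lin sc (*) g \<Longrightarrow> E (\<lambda>a b. eps a * g b) x = g x" unfolding swsum2_def by (rule CU1)
lemma CUE2_K: "lin sc (*) g \<Longrightarrow> E (\<lambda>a b. eps b * g a) x = g x" unfolding swsum2_def by (rule CU2)

lemma fubini: "E (\<lambda>c d. D (\<lambda>a b. F a b c d) x) y = D (\<lambda>a b. E (\<lambda>c d. F a b c d) y) x"
  by (rule swsum_fubini[symmetric])

lemma swapDD: "D (\<lambda>x1 x2. D (\<lambda>a b. D (\<lambda>c d. F c d a b) x1) x2) x = D (\<lambda>x1 x2. D (\<lambda>c d. D (\<lambda>a b. F c d a b) x2) x1) x"
proof -
  have "D (\<lambda>a b. D (\<lambda>c d. F c d a b) x1) x2 = D (\<lambda>c d. D (\<lambda>a b. F c d a b) x2) x1" for x1 x2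
    using swsum_fubini[where F="\<lambda>a b c d. F c d a b" and cop'=cop and x=x2 and y=x1] by (simp add: swsum2_def)
  then show ?thesis by simp
qed
lemma swapEE: "E (\<lambda>x1 x2. E (\<lambda>a b. E (\<lambda>c d. F c d a b) x1) x2) x = E (\<lambda>x1 x2. E (\<lambda>c d. E (\<lambda>a b. F c d a b) x2) x1) x"
  unfolding swsum2_def by (rule swapDD[unfolded swsum2_def])

lemma fubDD: "D (\<lambda>a b. D (\<lambda>c d. F a b c d) y) x = D (\<lambda>c d. D (\<lambda>a b. F a b c d) x) y"
  using swsum_fubini[where F="\<lambda>a b c d. F a b c d" and cop'=cop and x=x and y=y] by (simp add: swsum2_def)
lemma fubEE: "E (\<lambda>a b. E (\<lambda>c d. F a b c d) y) x = E (\<lambda>c d. E (\<lambda>a b. F a b c d) x) y"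
  using fubDD unfolding swsum2_def .
lemma swapA: "D (\<lambda>u1 u2. D (\<lambda>a b. D (\<lambda>c d. F u1 u2 a b c d) y) u2) x = D (\<lambda>u1 u2. D (\<lambda>c d. D (\<lambda>a b. F u1 u2 a b c d) u2) y) x"
  by (simp only: fubDD[of "\<lambda>a b c d. F _ _ a b c d"])
lemma swapB: "D (\<lambda>u1 u2. D (\<lambda>a b. D (\<lambda>c d. F u1 u2 a b c d) y) u1) x = D (\<lambda>u1 u2. D (\<lambda>c d. D (\<lambda>a b. F u1 u2 a b c d) u1) y) x"
  by (simp only: fubDD[of "\<lambda>a b c d. F _ _ a b c d"])
lemma swapAE: "E (\<lambda>u1 u2. E (\<lambda>a b. E (\<lambda>c d. F u1 u2 a b c d) y) u2) x = E (\<lambda>u1 u2. E (\<lambda>c d. E (\<lambda>a b. F u1 u2 a b c d) u2) y) x"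
  by (simp only: fubEE[of "\<lambda>a b c d. F _ _ a b c d"])
lemma swapBE: "E (\<lambda>u1 u2. E (\<lambda>a b. E (\<lambda>c d. F u1 u2 a b c d) y) u1) x = E (\<lambda>u1 u2. E (\<lambda>c d. E (\<lambda>a b. F u1 u2 a b c d) u1) y) x"
  by (simp only: fubEE[of "\<lambda>a b c d. F _ _ a b c d"])

lemmas NORM = swapA swapB swapAE swapBE swapDD swapEE LR pushD pushE pushDD_H pushDD_K pushDE_H pushDE_K pushED_H pushED_K pushEE_H pushEE_K
  scalars scD_H scD_K scE_H scE_K CA_H CA_K CAE_H CAE_K CU1_H CU2_H CU1_K CU2_K CUE1_H CUE2_H CUE1_K CUE2_K fubini
  pullsc sc_mult mult.assoc eps_mul eps_hit

lemma f_L1: "bilin sc sc (*) f \<Longrightarrow> lin sc sc g \<Longrightarrow> lin sc (*) (\<lambda>z. f (g z) c)" by (rule bl1)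
lemma f_L2: "bilin sc sc (*) f \<Longrightarrow> lin sc sc g \<Longrightarrow> lin sc (*) (\<lambda>z. f c (g z))" by (rule bl2)
lemma f_pD1: "bilin sc sc (*) f \<Longrightarrow> f (D F x) c = D (\<lambda>a b. f (F a b) c) x"
  by (rule swsum_pull[OF bl1[OF _ L_id]])
lemma f_pD2: "bilin sc sc (*) f \<Longrightarrow> f c (D F x) = D (\<lambda>a b. f c (F a b)) x"
  by (rule swsum_pull[OF bl2[OF _ L_id]])
lemma f_pE1: "bilin sc sc (*) f \<Longrightarrow> f (E F x) c = E (\<lambda>a b. f (F a b) c) x"
  by (rule swsum2_pull[OF bl1[OF _ L_id]])
lemma f_pE2: "bilin sc sc (*) f \<Longrightarrow> f c (E F x) = E (\<lambda>a b. f c (F a b)) x"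
  by (rule swsum2_pull[OF bl2[OF _ L_id]])
lemma f_sc1: "bilin sc sc (*) f \<Longrightarrow> f (sc k v) c = k * f v c"
  by (rule lin_scaleD[OF bl1[OF _ L_id]])
lemma f_sc2: "bilin sc sc (*) f \<Longrightarrow> f c (sc k v) = k * f c v"
  by (rule lin_scaleD[OF bl2[OF _ L_id]])
lemmas fR = f_L1 f_L2 f_pD1 f_pD2 f_pE1 f_pE2 f_sc1 f_sc2

lemma E_cong: "(\<And>a b. F a b = G a b) \<Longrightarrow> swsum2 cop F x = swsum2 cop G x"
  by (simp add: swsum2_def swsum_def split_def)
lemma DE: "swsum cop = swsum2 cop" by (simp add: swsum2_def)

lemma D_cong: "(\<And>a b. F a b = G a b) \<Longrightarrow> swsum cop F x = swsum cop G x"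
  by (simp add: swsum_def split_def)

lemma hitu: "hit x u = sc (eps x) u"
proof -
  have 1: "hit p w = D (\<lambda>a b. mul (hit a u) (hit b w)) p" for p w using P1[of p u w] by simp
  have "sc (eps x) z = D (\<lambda>p q. hit p (\<beta> q z)) x" for z by (simp add: P3a)
  also have "\<dots> z = D (\<lambda>p q. D (\<lambda>a b. mul (hit a u) (hit b (\<beta> q z))) p) x" for z by (rule D_cong, rule 1)
  also have "\<dots> z = D (\<lambda>a r. mul (hit a u) (D (\<lambda>b q. hit b (\<beta> q z)) r)) x" for z by (simp add: NORM)
  also have "\<dots> z = mul (hit x u) z" for z by (simp add: NORM P3a)
  finally have "sc (eps x) u = hit x u" by simp
  then show ?thesis by simp
qed

end

context ydph begin

lemma betau: "\<beta> x u = sc (eps x) u"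
proof -
  have "sc (eps x) u = D (\<lambda>a b. \<beta> a (hit b u)) x" by (simp add: P3b)
  also have "\<dots> = \<beta> x u" by (simp add: hitu NORM)
  finally show ?thesis by simp
qed

lemma D_u_H: "(\<And>b. lin sc sc (\<lambda>a. F a b)) \<Longrightarrow> (\<And>a. lin sc sc (\<lambda>b. F a b)) \<Longrightarrow> D F u = F u u"
  using TEQ2[OF cop_u sepH, of F] by (simp add: swsum_def)
lemma D_u_K: "(\<And>b. lin sc (*) (\<lambda>a. F a b)) \<Longrightarrow> (\<And>a. lin sc (*) (\<lambda>b. F a b)) \<Longrightarrow> D F u = F u u"
  using TEQ2[OF cop_u sepK, of F] by (simp add: swsum_def)

lemma hituu: "hit u u = u" by (simp add: hitu)
lemma buu: "bu u u = u" by (subst bul_def, subst D_u_H) (simp_all add: LR hituu)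
lemma hit_u_idem: "hit u (hit u z) = hit u z" by (simp add: P2 buu)
lemma hit_u_beta: "hit u (\<beta> u y) = y"
  using P3a[of y u] by (subst (asm) D_u_H) (simp_all add: LR)
lemma hit_u[simp]: "hit u y = y"
  by (metis hit_u_beta hit_u_idem)
lemma beta_u[simp]: "\<beta> u y = y"
  using hit_u_beta[of y] by simp
lemma bul_u1[simp]: "bu u x = x" by (subst bul_def, subst D_u_H) (simp_all add: LR)
lemma bul_u2[simp]: "bu x u = x" unfolding bul_def by (simp add: hitu NORM)
lemma S_u[simp]: "S u = u" using antiR[of u] by (subst (asm) D_u_H) (simp_all add: LR)
lemma T_u[simp]: "T u = u" unfolding Sh_def by (subst D_u_H) (simp_all add: LR)

lemma eps_S[simp]: "eps (S x) = eps x"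
proof -
  have "eps (D (\<lambda>a b. mul a (S b)) x) = eps x" by (simp add: antiR scalars)
  then show ?thesis by (simp add: NORM)
qed
lemma eps_beta[simp]: "eps (\<beta> x y) = eps x * eps y"
proof -
  have "eps (D (\<lambda>a b. hit a (\<beta> b y)) x) = eps x * eps y" by (simp add: P3a scalars)
  then show ?thesis by (simp add: NORM)
qed
lemma eps_T[simp]: "eps (T x) = eps x"
  unfolding Sh_def by (simp add: NORM)
lemma eps_bul[simp]: "eps (bu x y) = eps x * eps y"
  unfolding bul_def by (simp add: NORM)

end

context ydph begin

lemma cophit_H: assumes g1: "\<And>b. lin sc sc (\<lambda>a. G a b)" and g2: "\<And>a. lin sc sc (\<lambda>b. G a b)"
  shows "D G (hit x y) = D (\<lambda>x1 x2. E (\<lambda>y1 y2. G (hit x1 y1) (hit x2 y2)) y) x"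
  using TEQ2[OF cop_hit sepH g1 g2, of x y]
  by (simp add: swsum_def swsum2_def sum_list_map_concat split_def o_def)
lemma cophitE_H: assumes g1: "\<And>b. lin sc sc (\<lambda>a. G a b)" and g2: "\<And>a. lin sc sc (\<lambda>b. G a b)"
  shows "E G (hit x y) = D (\<lambda>x1 x2. E (\<lambda>y1 y2. G (hit x1 y1) (hit x2 y2)) y) x"
  using cophit_H[OF g1 g2] by (simp add: DE)
lemma copmul_H: assumes g1: "\<And>b. lin sc sc (\<lambda>a. G a b)" and g2: "\<And>a. lin sc sc (\<lambda>b. G a b)"
  shows "D G (mul x y) = D (\<lambda>p c. D (\<lambda>q b. D (\<lambda>a1 a2. E (\<lambda>y1 y2. G (mul a1 (hit a2 (\<beta> c y1))) (mul b y2)) y) q) p) x"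
  using TEQ2[OF P5 sepH g1 g2, of x y]
  by (simp add: swsum_def swsum2_def sum_list_map_concat split_def o_def cop4_def cop3_def)
lemma cophit_K: assumes g1: "\<And>b. lin sc (*) (\<lambda>a. G a b)" and g2: "\<And>a. lin sc (*) (\<lambda>b. G a b)"
  shows "D G (hit x y) = D (\<lambda>x1 x2. E (\<lambda>y1 y2. G (hit x1 y1) (hit x2 y2)) y) x"
  using TEQ2[OF cop_hit sepK g1 g2, of x y]
  by (simp add: swsum_def swsum2_def sum_list_map_concat split_def o_def)
lemma cophitE_K: assumes g1: "\<And>b. lin sc (*) (\<lambda>a. G a b)" and g2: "\<And>a. lin sc (*) (\<lambda>b. G a b)"
  shows "E G (hit x y) = D (\<lambda>x1 x2. E (\<lambda>y1 y2. G (hit x1 y1) (hit x2 y2)) y) x"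
  using cophit_K[OF g1 g2] by (simp add: DE)
lemma copmul_K: assumes g1: "\<And>b. lin sc (*) (\<lambda>a. G a b)" and g2: "\<And>a. lin sc (*) (\<lambda>b. G a b)"
  shows "D G (mul x y) = D (\<lambda>p c. D (\<lambda>q b. D (\<lambda>a1 a2. E (\<lambda>y1 y2. G (mul a1 (hit a2 (\<beta> c y1))) (mul b y2)) y) q) p) x"
  using TEQ2[OF P5 sepK g1 g2, of x y]
  by (simp add: swsum_def swsum2_def sum_list_map_concat split_def o_def cop4_def cop3_def)

lemma copbul_H: assumes g1: "\<And>b. lin sc sc (\<lambda>a. G a b)" and g2: "\<And>a. lin sc sc (\<lambda>b. G a b)"
  shows "D G (bu x y) = D (\<lambda>x1 x2. E (\<lambda>y1 y2. G (bu x1 y1) (bu x2 y2)) y) x"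
proof -
  note GR = lin_comp[OF _ g1] lin_comp[OF _ g2] swsum_pull[OF g1] swsum_pull[OF g2]
     swsum2_pull[OF g1] swsum2_pull[OF g2] lin_scaleD[OF g1] lin_scaleD[OF g2]
  have "D G (bu x y) = D (\<lambda>a1 r1. D (\<lambda>a2 r2. D (\<lambda>b' r3. D (\<lambda>m b2. E (\<lambda>y1 y2.
      G (mul a1 (hit a2 (D (\<lambda>c b1. \<beta> c (hit b1 y1)) m))) (mul b' (hit b2 y2))) y) r3) r2) r1) x"
    by (simp add: bul_def NORM GR g1 g2 copmul_H cophitE_H)
  also have "\<dots> = D (\<lambda>x1 x2. E (\<lambda>y1 y2. G (bu x1 y1) (bu x2 y2)) y) x"
    by (simp add: bul_def NORM GR g1 g2 P3b)
  finally show ?thesis .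
qed
lemma copbul_K: assumes g1: "\<And>b. lin sc (*) (\<lambda>a. G a b)" and g2: "\<And>a. lin sc (*) (\<lambda>b. G a b)"
  shows "D G (bu x y) = D (\<lambda>x1 x2. E (\<lambda>y1 y2. G (bu x1 y1) (bu x2 y2)) y) x"
proof -
  note GR = lin_comp[OF _ g1] lin_comp[OF _ g2] swsum_pull[OF g1] swsum_pull[OF g2]
     swsum2_pull[OF g1] swsum2_pull[OF g2] lin_scaleD[OF g1] lin_scaleD[OF g2]
  have "D G (bu x y) = D (\<lambda>a1 r1. D (\<lambda>a2 r2. D (\<lambda>b' r3. D (\<lambda>m b2. E (\<lambda>y1 y2.
      G (mul a1 (hit a2 (D (\<lambda>c b1. \<beta> c (hit b1 y1)) m))) (mul b' (hit b2 y2))) y) r3) r2) r1) x"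
    by (simp add: bul_def NORM GR g1 g2 copmul_K cophitE_K)
  also have "\<dots> = D (\<lambda>x1 x2. E (\<lambda>y1 y2. G (bu x1 y1) (bu x2 y2)) y) x"
    by (simp add: bul_def NORM GR g1 g2 P3b)
  finally show ?thesis .
qed

end

context ydph begin

lemma bul_assoc: "bu (bu x y) z = bu x (bu y z)"
proof -
  have "bu (bu x y) z = D (\<lambda>p q. mul p (hit q z)) (bu x y)" by (simp add: bul_def[of mul cop hit "bu x y" z])
  also have "\<dots> = D (\<lambda>x1 x2. E (\<lambda>y1 y2. mul (bu x1 y1) (hit (bu x2 y2) z)) y) x"
    by (rule copbul_H) (simp_all add: LR)
  also have "\<dots> = D (\<lambda>x1 x2. E (\<lambda>y1 y2. mul (bu x1 y1) (hit x2 (hit y2 z))) y) x"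
    by (simp add: P2)
  also have "\<dots> = D (\<lambda>a c. mul a (hit c (E (\<lambda>y1 y2. mul y1 (hit y2 z)) y))) x"
    by (simp add: bul_def NORM P1 mul_assoc)
  also have "\<dots> = bu x (bu y z)" by (simp add: bul_def DE)
  finally show ?thesis .
qed

lemma antiR_bu: "D (\<lambda>a b. bu a (T b)) y = sc (eps y) u"
proof -
  have "D (\<lambda>a b. bu a (T b)) y = D (\<lambda>y1 r. D (\<lambda>m y4. mul y1 (D (\<lambda>y2 y3. hit y2 (\<beta> y3 (S y4))) m)) r) y"
    by (simp add: bul_def Sh_def NORM)
  also have "\<dots> = sc (eps y) u" by (simp add: NORM P3a antiR)
  finally show ?thesis .
qed

lemma inv_lemma: assumes G: "lin sc sc G" and h: "\<And>x. D (\<lambda>p q. hit p (G q)) x = sc (eps x) v"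
  shows "G x = \<beta> x v"
proof -
  have "\<beta> x v = D (\<lambda>p q. \<beta> p (D (\<lambda>a b. hit a (G b)) q)) x" by (simp add: h NORM)
  also have "\<dots> = D (\<lambda>c b. D (\<lambda>p a. \<beta> p (hit a (G b))) c) x" by (simp add: NORM G)
  also have "\<dots> = G x" by (simp add: NORM G P3b)
  finally show ?thesis by simp
qed

lemma hit_T[simp]: "hit (T y) w = \<beta> y w"
proof (rule inv_lemma[where G="\<lambda>b. hit (T b) w"])
  show "lin sc sc (\<lambda>b. hit (T b) w)" by (simp add: LR)
  fix x
  have "D (\<lambda>a b. hit a (hit (T b) w)) x = hit (D (\<lambda>a b. bu a (T b)) x) w" by (simp add: P2 pushD)
  also have "\<dots> = sc (eps x) w" by (simp add: antiR_bu scalars)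
  finally show "D (\<lambda>p q. hit p (hit (T q) w)) x = sc (eps x) w" .
qed

lemma beta_mul: "\<beta> x (mul a b) = D (\<lambda>x1 x2. mul (\<beta> x2 a) (\<beta> x1 b)) x"
proof -
  have "D (\<lambda>r s. mul (\<beta> s a) (\<beta> r b)) x = \<beta> x (mul a b)"
  proof (rule inv_lemma[where G="\<lambda>q. D (\<lambda>r s. mul (\<beta> s a) (\<beta> r b)) q"])
    show "lin sc sc (\<lambda>q. D (\<lambda>r s. mul (\<beta> s a) (\<beta> r b)) q)" by (simp add: LR)
    fix x
    have "D (\<lambda>p q. hit p (D (\<lambda>r s. mul (\<beta> s a) (\<beta> r b)) q)) x
       = D (\<lambda>x1 r1. D (\<lambda>m x4. mul (hit x1 (\<beta> x4 a)) (D (\<lambda>x2 x3. hit x2 (\<beta> x3 b)) m)) r1) x"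
      by (simp add: NORM P1)
    also have "\<dots> = D (\<lambda>x1 x4. mul (hit x1 (\<beta> x4 a)) b) x" by (simp add: NORM P3a)
    also have "\<dots> = mul (D (\<lambda>x1 x4. hit x1 (\<beta> x4 a)) x) b" by (simp add: pushD)
    also have "\<dots> = sc (eps x) (mul a b)" by (simp add: P3a scalars)
    finally show "D (\<lambda>p q. hit p (D (\<lambda>r s. mul (\<beta> s a) (\<beta> r b)) q)) x = sc (eps x) (mul a b)" .
  qed
  then show ?thesis by simp
qed

lemma copT_H: assumes g1: "\<And>b. lin sc sc (\<lambda>a. G a b)" and g2: "\<And>a. lin sc sc (\<lambda>b. G a b)"
  shows "D G (T x) = D (\<lambda>a b. G (T b) (T a)) x"
  using TEQ2[OF P6a sepH g1 g2, of x]
  by (simp add: swsum_def split_def o_def)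
lemma copT_K: assumes g1: "\<And>b. lin sc (*) (\<lambda>a. G a b)" and g2: "\<And>a. lin sc (*) (\<lambda>b. G a b)"
  shows "D G (T x) = D (\<lambda>a b. G (T b) (T a)) x"
  using TEQ2[OF P6a sepK g1 g2, of x]
  by (simp add: swsum_def split_def o_def)

lemma antiL_bu: "D (\<lambda>a b. bu (T a) b) x = sc (eps x) u"
proof -
  have "D (\<lambda>a b. bu (T a) b) x = D (\<lambda>a b. D (\<lambda>p q. mul p (hit q b)) (T a)) x"
    by (simp add: bul_def)
  also have "\<dots> = D (\<lambda>a b. D (\<lambda>a1 a2. mul (T a2) (\<beta> a1 b)) a) x"
    by (subst copT_H) (simp_all add: LR)
  also have "\<dots> = D (\<lambda>p r. \<beta> p (D (\<lambda>x3 x4. mul (S x3) x4) r)) x"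
    by (simp add: Sh_def NORM beta_mul)
  also have "\<dots> = sc (eps x) u" by (simp add: antiL NORM betau)
  finally show ?thesis .
qed

end

context ydph begin

lemma antiR_buE: "E (\<lambda>a b. bu a (T b)) y = sc (eps y) u" using antiR_bu by (simp add: DE)
lemma antiL_buE: "E (\<lambda>a b. bu (T a) b) y = sc (eps y) u" using antiL_bu by (simp add: DE)

lemma MF2: "D (\<lambda>x1 x2. E (\<lambda>y1 y2. bu x1 (bu y1 (bu (T y2) (T x2)))) y) x = sc (eps x * eps y) u"
proof -
  have "D (\<lambda>x1 x2. E (\<lambda>y1 y2. bu x1 (bu y1 (bu (T y2) (T x2)))) y) x
     = D (\<lambda>x1 x2. bu x1 (bu (E (\<lambda>y1 y2. bu y1 (T y2)) y) (T x2))) x"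
    by (simp add: NORM bul_assoc)
  also have "\<dots> = sc (eps y) (D (\<lambda>x1 x2. bu x1 (T x2)) x)" by (simp add: antiR_buE NORM)
  also have "\<dots> = sc (eps x * eps y) u" by (simp add: antiR_bu sc_sc mult.commute)
  finally show ?thesis .
qed

lemma F1M: "D (\<lambda>x1 x2. E (\<lambda>y1 y2. bu (T (bu x1 y1)) (bu x2 y2)) y) x = sc (eps x * eps y) u"
proof -
  have "D (\<lambda>a b. bu (T a) b) (bu x y) = D (\<lambda>x1 x2. E (\<lambda>y1 y2. bu (T (bu x1 y1)) (bu x2 y2)) y) x"
    by (rule copbul_H) (simp_all add: LR)
  then show ?thesis by (simp add: antiL_bu)
qed

lemma Tbu: "T (bu x y) = bu (T y) (T x)"
proof -
  have "T (bu x y) = D (\<lambda>x1 r. E (\<lambda>y1 s. bu (T (bu x1 y1))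
         (D (\<lambda>x2 x3. E (\<lambda>y2 y3. bu x2 (bu y2 (bu (T y3) (T x3)))) s) r)) y) x"
    by (simp add: MF2 NORM)
  also have "\<dots> = D (\<lambda>m x3. E (\<lambda>n y3. bu (D (\<lambda>x1 x2. E (\<lambda>y1 y2. bu (T (bu x1 y1)) (bu x2 y2)) n) m)
         (bu (T y3) (T x3))) y) x"
    by (simp add: NORM bul_assoc)
  also have "\<dots> = bu (T y) (T x)"
    by (simp add: F1M NORM)
  finally show ?thesis .
qed

end

context ydph begin

abbreviation lh where "lh \<equiv> lhit mul cop S hit \<beta>"

lemma lhit_E: "lh x y = D (\<lambda>x1 x2. E (\<lambda>y1 y2. bu (T (hit x1 y1)) (bu x2 y2)) y) x"
  unfolding lhit_def swsum2_def by (rule D_cong, rule D_cong, rule bul_assoc)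

lemma bil_lh: "bilin sc sc sc lh"
  unfolding bilin_def lhit_E by (simp add: LR)

lemma L_lh1: "lin sc sc g \<Longrightarrow> lin sc sc (\<lambda>z. lh (g z) c)" by (rule bl1[OF bil_lh])
lemma L_lh2: "lin sc sc g \<Longrightarrow> lin sc sc (\<lambda>z. lh c (g z))" by (rule bl2[OF bil_lh])

lemmas pushLh = swsum_pull[OF L_lh1[OF L_id]] swsum_pull[OF L_lh2[OF L_id]]
  swsum2_pull[OF L_lh1[OF L_id]] swsum2_pull[OF L_lh2[OF L_id]]
  lin_scaleD[OF L_lh1[OF L_id]] lin_scaleD[OF L_lh2[OF L_id]]

lemma eps_lh[simp]: "eps (lh x y) = eps x * eps y"
  unfolding lhit_E by (simp add: NORM)

lemmas N2 = NORM L_lh1 L_lh2 pushLh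

lemma P6t_H: assumes g1: "\<And>b. lin sc sc (\<lambda>a. F a b)" and g2: "\<And>a. lin sc sc (\<lambda>b. F a b)"
  shows "D (\<lambda>x1 x2. E (\<lambda>y1 y2. F (hit x1 y1) (lh x2 y2)) y) x = D (\<lambda>x1 x2. E (\<lambda>y1 y2. F (hit x2 y2) (lh x1 y1)) y) x"
  using TEQ2[OF P6b[where x=x and y=y] sepH g1 g2]
  by (simp add: swsum_def swsum2_def sum_list_map_concat split_def o_def)
lemma copbulE_H: assumes g1: "\<And>b. lin sc sc (\<lambda>a. G a b)" and g2: "\<And>a. lin sc sc (\<lambda>b. G a b)"
  shows "E G (bu x y) = D (\<lambda>x1 x2. E (\<lambda>y1 y2. G (bu x1 y1) (bu x2 y2)) y) x"
  using copbul_H[OF g1 g2] by (simp add: DE)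
lemma copTE_H: assumes g1: "\<And>b. lin sc sc (\<lambda>a. G a b)" and g2: "\<And>a. lin sc sc (\<lambda>b. G a b)"
  shows "E G (T x) = E (\<lambda>a b. G (T b) (T a)) x"
  using copT_H[OF g1 g2] by (simp add: DE)
lemma P6t_K: assumes g1: "\<And>b. lin sc (*) (\<lambda>a. F a b)" and g2: "\<And>a. lin sc (*) (\<lambda>b. F a b)"
  shows "D (\<lambda>x1 x2. E (\<lambda>y1 y2. F (hit x1 y1) (lh x2 y2)) y) x = D (\<lambda>x1 x2. E (\<lambda>y1 y2. F (hit x2 y2) (lh x1 y1)) y) x"
  using TEQ2[OF P6b[where x=x and y=y] sepK g1 g2]
  by (simp add: swsum_def swsum2_def sum_list_map_concat split_def o_def)
lemma copbulE_K: assumes g1: "\<And>b. lin sc (*) (\<lambda>a. G a b)" and g2: "\<And>a. lin sc (*) (\<lambda>b. G a b)"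
  shows "E G (bu x y) = D (\<lambda>x1 x2. E (\<lambda>y1 y2. G (bu x1 y1) (bu x2 y2)) y) x"
  using copbul_K[OF g1 g2] by (simp add: DE)
lemma copTE_K: assumes g1: "\<And>b. lin sc (*) (\<lambda>a. G a b)" and g2: "\<And>a. lin sc (*) (\<lambda>b. G a b)"
  shows "E G (T x) = E (\<lambda>a b. G (T b) (T a)) x"
  using copT_K[OF g1 g2] by (simp add: DE)

lemma m_split: "D (\<lambda>a1 a2. E (\<lambda>v1 v2. bu (hit a1 v1) (lh a2 v2)) v) a = bu a v"
proof -
  have "D (\<lambda>a1 a2. E (\<lambda>v1 v2. bu (hit a1 v1) (lh a2 v2)) v) a
      = D (\<lambda>m a3. E (\<lambda>n v3. bu (D (\<lambda>p q. bu p (T q)) (hit m n)) (bu a3 v3)) v) a"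
    by (simp add: lhit_E N2 cophit_H bul_assoc)
  also have "\<dots> = bu a v" by (simp add: antiR_bu N2)
  finally show ?thesis .
qed

lemma lhit_cop_H: assumes g1: "\<And>b. lin sc sc (\<lambda>a. G a b)" and g2: "\<And>a. lin sc sc (\<lambda>b. G a b)"
  shows "D G (lh a v) = D (\<lambda>a1 a2. E (\<lambda>v1 v2. G (lh a1 v1) (lh a2 v2)) v) a"
proof -
  note GR = lin_comp[OF _ g1] lin_comp[OF _ g2] swsum_pull[OF g1] swsum_pull[OF g2]
     swsum2_pull[OF g1] swsum2_pull[OF g2] lin_scaleD[OF g1] lin_scaleD[OF g2] g1 g2
  have sw: "D (\<lambda>a1 a2. E (\<lambda>v1 v2. G (lh a2 v2) (bu (T (hit a1 v1)) (bu a3 v3))) q) p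
          = D (\<lambda>a1 a2. E (\<lambda>v1 v2. G (lh a1 v1) (bu (T (hit a2 v2)) (bu a3 v3))) q) p" for a3 v3 p q
    using P6t_H[where F="\<lambda>h l. G l (bu (T h) (bu a3 v3))" and x=p and y=q] by (simp add: LR GR)
  have "D G (lh a v) = D (\<lambda>a1 r1. D (\<lambda>a2 r2. D (\<lambda>a3 a4. E (\<lambda>v1 s1. E (\<lambda>v2 s2. E (\<lambda>v3 v4.
          G (bu (T (hit a2 v2)) (D (\<lambda>p q. E (\<lambda>r s. bu (hit p r) (lh q s)) v3) a3)) (bu (T (hit a1 v1)) (bu a4 v4))
          ) s2) s1) v) r2) r1) a"
    by (simp only: m_split, simp add: lhit_E N2 GR copbul_H copbulE_H copT_H copTE_H cophit_H cophitE_H)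
  also have "\<dots> = D (\<lambda>a1 r1. D (\<lambda>m r2. D (\<lambda>a4 a5. E (\<lambda>v1 s1. E (\<lambda>n s2. E (\<lambda>v4 v5.
          G (bu (D (\<lambda>p q. bu (T p) q) (hit m n)) (lh a4 v4)) (bu (T (hit a1 v1)) (bu a5 v5))
          ) s2) s1) v) r2) r1) a"
    by (simp add: N2 GR cophit_H cophit_H cophitE_H bul_assoc)
  also have "\<dots> = D (\<lambda>p a3. E (\<lambda>q v3. D (\<lambda>a1 a2. E (\<lambda>v1 v2. G (lh a2 v2) (bu (T (hit a1 v1)) (bu a3 v3))) q) p) v) a"
    by (simp add: N2 GR antiL_bu)
  also have "\<dots> = D (\<lambda>p a3. E (\<lambda>q v3. D (\<lambda>a1 a2. E (\<lambda>v1 v2. G (lh a1 v1) (bu (T (hit a2 v2)) (bu a3 v3))) q) p) v) a"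
    by (simp only: sw)
  also have "\<dots> = D (\<lambda>a1 p. E (\<lambda>v1 q. G (lh a1 v1) (D (\<lambda>a2 a3. E (\<lambda>v2 v3. bu (T (hit a2 v2)) (bu a3 v3)) q) p)) v) a"
    by (simp add: N2 GR)
  also have "\<dots> = D (\<lambda>a1 a2. E (\<lambda>v1 v2. G (lh a1 v1) (lh a2 v2)) v) a"
    by (simp only: lhit_E[symmetric])
  finally show ?thesis .
qed
lemma lhit_cop_K: assumes g1: "\<And>b. lin sc (*) (\<lambda>a. G a b)" and g2: "\<And>a. lin sc (*) (\<lambda>b. G a b)"
  shows "D G (lh a v) = D (\<lambda>a1 a2. E (\<lambda>v1 v2. G (lh a1 v1) (lh a2 v2)) v) a"
proof -
  note GR = lin_comp[OF _ g1] lin_comp[OF _ g2] swsum_pull[OF g1] swsum_pull[OF g2]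
     swsum2_pull[OF g1] swsum2_pull[OF g2] lin_scaleD[OF g1] lin_scaleD[OF g2] g1 g2
  have sw: "D (\<lambda>a1 a2. E (\<lambda>v1 v2. G (lh a2 v2) (bu (T (hit a1 v1)) (bu a3 v3))) q) p
          = D (\<lambda>a1 a2. E (\<lambda>v1 v2. G (lh a1 v1) (bu (T (hit a2 v2)) (bu a3 v3))) q) p" for a3 v3 p q
    using P6t_K[where F="\<lambda>h l. G l (bu (T h) (bu a3 v3))" and x=p and y=q] by (simp add: LR GR)
  have "D G (lh a v) = D (\<lambda>a1 r1. D (\<lambda>a2 r2. D (\<lambda>a3 a4. E (\<lambda>v1 s1. E (\<lambda>v2 s2. E (\<lambda>v3 v4.
          G (bu (T (hit a2 v2)) (D (\<lambda>p q. E (\<lambda>r s. bu (hit p r) (lh q s)) v3) a3)) (bu (T (hit a1 v1)) (bu a4 v4))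
          ) s2) s1) v) r2) r1) a"
    by (simp only: m_split, simp add: lhit_E N2 GR copbul_K copbulE_K copT_K copTE_K cophit_K cophitE_K)
  also have "\<dots> = D (\<lambda>a1 r1. D (\<lambda>m r2. D (\<lambda>a4 a5. E (\<lambda>v1 s1. E (\<lambda>n s2. E (\<lambda>v4 v5.
          G (bu (D (\<lambda>p q. bu (T p) q) (hit m n)) (lh a4 v4)) (bu (T (hit a1 v1)) (bu a5 v5))
          ) s2) s1) v) r2) r1) a"
    by (simp add: N2 GR cophit_K cophit_H cophitE_K bul_assoc)
  also have "\<dots> = D (\<lambda>p a3. E (\<lambda>q v3. D (\<lambda>a1 a2. E (\<lambda>v1 v2. G (lh a2 v2) (bu (T (hit a1 v1)) (bu a3 v3))) q) p) v) a"
    by (simp add: N2 GR antiL_bu)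
  also have "\<dots> = D (\<lambda>p a3. E (\<lambda>q v3. D (\<lambda>a1 a2. E (\<lambda>v1 v2. G (lh a1 v1) (bu (T (hit a2 v2)) (bu a3 v3))) q) p) v) a"
    by (simp only: sw)
  also have "\<dots> = D (\<lambda>a1 p. E (\<lambda>v1 q. G (lh a1 v1) (D (\<lambda>a2 a3. E (\<lambda>v2 v3. bu (T (hit a2 v2)) (bu a3 v3)) q) p)) v) a"
    by (simp add: N2 GR)
  also have "\<dots> = D (\<lambda>a1 a2. E (\<lambda>v1 v2. G (lh a1 v1) (lh a2 v2)) v) a"
    by (simp only: lhit_E[symmetric])
  finally show ?thesis .
qed

end

context ydph begin

abbreviation ad where "ad \<equiv> adL mul cop S hit \<beta>"

lemma adL_sum: "sum_list (map (\<lambda>(m, v0). G m v0) (ad x)) = D (\<lambda>p a3. D (\<lambda>a1 a2. G (bu a1 (T a3)) a2) p) x"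
  unfolding adL_def cop3_def swsum_def by (simp add: sum_list_map_concat split_def o_def)

lemma A7_core:
  assumes f: "bilin sc sc (*) f"
  shows "D (\<lambda>p a3. D (\<lambda>a1 a2. f (bu a1 (T a3)) a2) p) (hit a v)
     = D (\<lambda>p a3. D (\<lambda>a1 a2. E (\<lambda>q v3. E (\<lambda>v1 v2. f (bu (bu a1 (bu v1 (T v3))) (T a3)) (hit a2 v2)) q) v) p) a"
proof -
  note FR = fR[OF f]
  define MS where "MS = (\<lambda>x y. D (\<lambda>b1 b2. E (\<lambda>c1 c2. bu (hit b1 c1) (lh b2 c2)) y) x)"
  have MS: "MS x y = bu x y" for x y unfolding MS_def by (rule m_split)
  have sw1: "D (\<lambda>a2 a3. E (\<lambda>v2 v3. f (bu (hit a1 v1) (bu (lh a2 v2) (bu (T (lh a5 v5)) (T (hit a4 v4))))) (hit a3 v3)) q) p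
           = D (\<lambda>a2 a3. E (\<lambda>v2 v3. f (bu (hit a1 v1) (bu (lh a3 v3) (bu (T (lh a5 v5)) (T (hit a4 v4))))) (hit a2 v2)) q) p"
    for a1 v1 a4 v4 a5 v5 p q
    using P6t_K[where F="\<lambda>h l. f (bu (hit a1 v1) (bu l (bu (T (lh a5 v5)) (T (hit a4 v4))))) h" and x=p and y=q]
    by (simp add: LR FR L_lh1 L_lh2)
  have sw2: "D (\<lambda>a3 a4. E (\<lambda>v3 v4. f (bu (hit a1 v1) (bu (lh a3 v3) (bu (T (lh a5 v5)) (T (hit a4 v4))))) (hit a2 v2)) q) p
           = D (\<lambda>a3 a4. E (\<lambda>v3 v4. f (bu (hit a1 v1) (bu (lh a4 v4) (bu (T (lh a5 v5)) (T (hit a3 v3))))) (hit a2 v2)) q) p"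
    for a1 v1 a2 v2 a5 v5 p q
    using P6t_K[where F="\<lambda>h l. f (bu (hit a1 v1) (bu l (bu (T (lh a5 v5)) (T h)))) (hit a2 v2)" and x=p and y=q]
    by (simp add: LR FR L_lh1 L_lh2)
  have "D (\<lambda>p a3. D (\<lambda>a1 a2. E (\<lambda>q v3. E (\<lambda>v1 v2. f (bu (bu a1 (bu v1 (T v3))) (T a3)) (hit a2 v2)) q) v) p) a
      = D (\<lambda>p a3. E (\<lambda>q v3. D (\<lambda>a1 a2. E (\<lambda>v1 v2. f (bu (MS a1 v1) (T (MS a3 v3))) (hit a2 v2)) q) p) v) a"
    by (simp only: MS, simp add: N2 FR Tbu bul_assoc)
  also have "\<dots> = D (\<lambda>a1 r. E (\<lambda>v1 s. D (\<lambda>p r'. E (\<lambda>q s'. D (\<lambda>a4 a5. E (\<lambda>v4 v5.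
        D (\<lambda>a2 a3. E (\<lambda>v2 v3. f (bu (hit a1 v1) (bu (lh a2 v2) (bu (T (lh a5 v5)) (T (hit a4 v4))))) (hit a3 v3)) q) p
        ) s') r') s) r) v) a"
    by (simp add: MS_def N2 FR Tbu bul_assoc)
  also have "\<dots> = D (\<lambda>a1 r. E (\<lambda>v1 s. D (\<lambda>p r'. E (\<lambda>q s'. D (\<lambda>a4 a5. E (\<lambda>v4 v5.
        D (\<lambda>a2 a3. E (\<lambda>v2 v3. f (bu (hit a1 v1) (bu (lh a3 v3) (bu (T (lh a5 v5)) (T (hit a4 v4))))) (hit a2 v2)) q) p
        ) s') r') s) r) v) a"
    by (simp only: sw1)
  also have "\<dots> = D (\<lambda>a1 r1. E (\<lambda>v1 s1. D (\<lambda>a2 r2. E (\<lambda>v2 s2. D (\<lambda>p a5. E (\<lambda>q v5.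
        D (\<lambda>a3 a4. E (\<lambda>v3 v4. f (bu (hit a1 v1) (bu (lh a3 v3) (bu (T (lh a5 v5)) (T (hit a4 v4))))) (hit a2 v2)) q) p
        ) s2) r2) s1) r1) v) a"
    by (simp add: N2 FR)
  also have "\<dots> = D (\<lambda>a1 r1. E (\<lambda>v1 s1. D (\<lambda>a2 r2. E (\<lambda>v2 s2. D (\<lambda>p a5. E (\<lambda>q v5.
        D (\<lambda>a3 a4. E (\<lambda>v3 v4. f (bu (hit a1 v1) (bu (lh a4 v4) (bu (T (lh a5 v5)) (T (hit a3 v3))))) (hit a2 v2)) q) p
        ) s2) r2) s1) r1) v) a"
    by (simp only: sw2)
  also have "\<dots> = D (\<lambda>a1 r1. E (\<lambda>v1 s1. D (\<lambda>a2 r2. E (\<lambda>v2 s2. D (\<lambda>a3 m. E (\<lambda>v3 n.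
        f (bu (hit a1 v1) (bu (D (\<lambda>p q. bu p (T q)) (lh m n)) (T (hit a3 v3)))) (hit a2 v2)
        ) s2) r2) s1) r1) v) a"
    by (simp add: N2 FR lhit_cop_H bul_assoc)
  also have "\<dots> = D (\<lambda>p a3. D (\<lambda>a1 a2. f (bu a1 (T a3)) a2) p) (hit a v)"
    by (simp add: N2 FR antiR_bu cophit_K)
  finally show ?thesis by simp
qed

end

context ydph begin

lemma copbeta_H: assumes g1: "\<And>b. lin sc sc (\<lambda>a. G a b)" and g2: "\<And>a. lin sc sc (\<lambda>b. G a b)"
  shows "D G (\<beta> x y) = D (\<lambda>x1 x2. E (\<lambda>y1 y2. G (\<beta> x2 y1) (\<beta> x1 y2)) y) x"
proof -
  have "D G (\<beta> x y) = D G (hit (T x) y)" by simp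
  also have "\<dots> = D (\<lambda>x1 x2. E (\<lambda>y1 y2. G (hit x1 y1) (hit x2 y2)) y) (T x)"
    by (rule cophit_H[OF g1 g2])
  also have "\<dots> = D (\<lambda>x1 x2. E (\<lambda>y1 y2. G (hit (T x2) y1) (hit (T x1) y2)) y) x"
    by (rule copT_H) (simp_all add: LR lin_comp[OF _ g1] lin_comp[OF _ g2])
  finally show ?thesis by simp
qed
lemma copbetaE_H: assumes g1: "\<And>b. lin sc sc (\<lambda>a. G a b)" and g2: "\<And>a. lin sc sc (\<lambda>b. G a b)"
  shows "E G (\<beta> x y) = D (\<lambda>x1 x2. E (\<lambda>y1 y2. G (\<beta> x2 y1) (\<beta> x1 y2)) y) x"
  using copbeta_H[OF g1 g2] by (simp add: DE)
lemma copbeta_K: assumes g1: "\<And>b. lin sc (*) (\<lambda>a. G a b)" and g2: "\<And>a. lin sc (*) (\<lambda>b. G a b)"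
  shows "D G (\<beta> x y) = D (\<lambda>x1 x2. E (\<lambda>y1 y2. G (\<beta> x2 y1) (\<beta> x1 y2)) y) x"
proof -
  have "D G (\<beta> x y) = D G (hit (T x) y)" by simp
  also have "\<dots> = D (\<lambda>x1 x2. E (\<lambda>y1 y2. G (hit x1 y1) (hit x2 y2)) y) (T x)"
    by (rule cophit_K[OF g1 g2])
  also have "\<dots> = D (\<lambda>x1 x2. E (\<lambda>y1 y2. G (hit (T x2) y1) (hit (T x1) y2)) y) x"
    by (rule copT_K) (simp_all add: LR lin_comp[OF _ g1] lin_comp[OF _ g2])
  finally show ?thesis by simp
qed
lemma copbetaE_K: assumes g1: "\<And>b. lin sc (*) (\<lambda>a. G a b)" and g2: "\<And>a. lin sc (*) (\<lambda>b. G a b)"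
  shows "E G (\<beta> x y) = D (\<lambda>x1 x2. E (\<lambda>y1 y2. G (\<beta> x2 y1) (\<beta> x1 y2)) y) x"
  using copbeta_K[OF g1 g2] by (simp add: DE)

lemma mul_bu: "mul x y = D (\<lambda>a b. bu a (\<beta> b y)) x"
proof -
  have "D (\<lambda>a b. bu a (\<beta> b y)) x = D (\<lambda>a1 r. mul a1 (D (\<lambda>a2 b. hit a2 (\<beta> b y)) r)) x"
    by (simp add: bul_def NORM)
  also have "\<dots> = mul x y" by (simp add: P3a NORM)
  finally show ?thesis by simp
qed

lemma B7_core:
  assumes f: "bilin sc sc (*) f"
  shows "D (\<lambda>p a3. D (\<lambda>a1 a2. f (bu a1 (T a3)) a2) p) (mul x y)
     = D (\<lambda>p a3. D (\<lambda>a1 a2. E (\<lambda>q b3. E (\<lambda>b1 b2. f (bu (bu a1 (T a3)) (bu b1 (T b3))) (mul a2 b2)) q) y) p) x"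
proof -
  note FR = fR[OF f]
  have A7i: "D (\<lambda>p' a3'. D (\<lambda>a1' a2'. f (bu a1 (bu (bu a1' (T a3')) (T a3))) (bu a2 a2')) p') (hit (T c) y)
     = D (\<lambda>p' a3'. D (\<lambda>a1' a2'. E (\<lambda>q v3. E (\<lambda>v1 v2. f (bu a1 (bu (bu (bu a1' (bu v1 (T v3))) (T a3')) (T a3))) (bu a2 (hit a2' v2))) q) y) p') (T c)"
    for a1 a2 a3 c
    using A7_core[of "\<lambda>m z0. f (bu a1 (bu m (T a3))) (bu a2 z0)" "T c" y] by (simp add: LR FR bilin_def)
  have "D (\<lambda>p a3. D (\<lambda>a1 a2. f (bu a1 (T a3)) a2) p) (mul x y)
     = D (\<lambda>a x'. D (\<lambda>p a3. D (\<lambda>a1 a2. D (\<lambda>p' a3'. D (\<lambda>a1' a2'. f (bu a1 (bu (bu a1' (T a3')) (T a3))) (bu a2 a2')) p') (hit (T x') y)) p) a) x"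
    by (simp add: N2 FR mul_bu bul_assoc copbul_K copbulE_K copbeta_K copbetaE_K Tbu)
  also have "\<dots> = D (\<lambda>a x'. D (\<lambda>p a3. D (\<lambda>a1 a2. D (\<lambda>p' a3'. D (\<lambda>a1' a2'. E (\<lambda>q v3. E (\<lambda>v1 v2. f (bu a1 (bu (bu (bu a1' (bu v1 (T v3))) (T a3')) (T a3))) (bu a2 (hit a2' v2))) q) y) p') (T x')) p) a) x"
    by (simp only: A7i)
  also have "\<dots> = D (\<lambda>x1 r1. D (\<lambda>x2 r2. D (\<lambda>m r3. D (\<lambda>x5 x6. E (\<lambda>v1 s. E (\<lambda>v2 v3.
       f (bu x1 (bu (T x6) (bu v1 (bu (T v3) (T (D (\<lambda>p q. bu p (T q)) m)))))) (bu x2 (\<beta> x5 v2))) s) y) r3) r2) r1) x"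
    by (simp add: N2 FR copT_K Tbu bul_assoc)
  also have "\<dots> = D (\<lambda>p a3. D (\<lambda>a1 a2. E (\<lambda>q b3. E (\<lambda>b1 b2. f (bu (bu a1 (T a3)) (bu b1 (T b3))) (mul a2 b2)) q) y) p) x"
    by (simp add: N2 FR antiR_bu mul_bu bul_assoc)
  finally show ?thesis .
qed

end

context ydph begin

lemma copTED_K: assumes g1: "\<And>b. lin sc (*) (\<lambda>a. G a b)" and g2: "\<And>a. lin sc (*) (\<lambda>b. G a b)"
  shows "E G (T x) = D (\<lambda>a b. G (T b) (T a)) x"
  using copT_K[OF g1 g2] by (simp add: DE)

lemma antiRE: "E (\<lambda>a b. mul a (S b)) x = sc (eps x) u" using antiR by (simp add: DE)

lemma LF: "D (\<lambda>a1 a2. E (\<lambda>x1 x2. mul (hit a1 x1) (hit a2 (S x2))) x) a = sc (eps x) (sc (eps a) u)"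
proof -
  have "D (\<lambda>a1 a2. E (\<lambda>x1 x2. mul (hit a1 x1) (hit a2 (S x2))) x) a = hit a (E (\<lambda>x1 x2. mul x1 (S x2)) x)"
    by (simp add: NORM P1)
  also have "\<dots> = sc (eps x) (sc (eps a) u)" by (simp add: antiRE scalars hitu)
  finally show ?thesis .
qed

lemma GL: "D (\<lambda>a1 a2. E (\<lambda>x1 x2. mul (S (hit a1 x1)) (hit a2 x2)) x) a = sc (eps a) (sc (eps x) u)"
proof -
  have "D (\<lambda>p q. mul (S p) q) (hit a x) = D (\<lambda>a1 a2. E (\<lambda>x1 x2. mul (S (hit a1 x1)) (hit a2 x2)) x) a"
    by (rule cophit_H) (simp_all add: LR)
  then show ?thesis by (simp add: antiL sc_mult eps_hit)
qed

lemma S_hit: "S (hit a x) = hit a (S x)"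
proof -
  have "S (hit a x) = D (\<lambda>a1 r. E (\<lambda>x1 s. mul (S (hit a1 x1))
       (D (\<lambda>a2 a3. E (\<lambda>x2 x3. mul (hit a2 x2) (hit a3 (S x3))) s) r)) x) a"
    by (simp add: LF NORM)
  also have "\<dots> = D (\<lambda>m a3. E (\<lambda>n x3. mul (D (\<lambda>a1 a2. E (\<lambda>x1 x2. mul (S (hit a1 x1)) (hit a2 x2)) n) m)
       (hit a3 (S x3))) x) a"
    by (simp add: NORM mul_assoc)
  also have "\<dots> = hit a (S x)" by (simp add: GL NORM)
  finally show ?thesis .
qed

lemma S_hitT: "S x = D (\<lambda>a b. hit a (T b)) x"
proof -
  have "D (\<lambda>a b. hit a (T b)) x = D (\<lambda>m d. D (\<lambda>a c. hit a (\<beta> c (S d))) m) x"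
    by (simp add: Sh_def NORM)
  also have "\<dots> = S x" by (simp add: P3a NORM)
  finally show ?thesis by simp
qed

lemma B15_core:
  assumes f: "bilin sc sc (*) f"
  shows "D (\<lambda>p a3. D (\<lambda>a1 a2. f (bu a1 (T a3)) a2) p) (S x) = D (\<lambda>p a3. D (\<lambda>a1 a2. f (bu a1 (T a3)) (S a2)) p) x"
proof -
  note FR = fR[OF f]
  have A7i: "D (\<lambda>a1 r. D (\<lambda>a2 a3. f (bu a1 (T a3)) a2) r) (hit a (T b))
    = D (\<lambda>p a3. D (\<lambda>a1 a2. E (\<lambda>q v3. E (\<lambda>v1 v2. f (bu (bu a1 (bu v1 (T v3))) (T a3)) (hit a2 v2)) q) (T b)) p) a" for a b
    using A7_core[OF f, of a "T b"] by (simp add: N2 FR)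
  have "D (\<lambda>p a3. D (\<lambda>a1 a2. f (bu a1 (T a3)) a2) p) (S x)
     = D (\<lambda>a b. D (\<lambda>p a3. D (\<lambda>a1 a2. E (\<lambda>q v3. E (\<lambda>v1 v2. f (bu (bu a1 (bu v1 (T v3))) (T a3)) (hit a2 v2)) q) (T b)) p) a) x"
    by (subst S_hitT, simp add: N2 FR A7i)
  also have "\<dots> = D (\<lambda>x1 r1. D (\<lambda>x2 r2. D (\<lambda>m r3. D (\<lambda>x5 x6.
       f (bu x1 (bu (T x6) (T (D (\<lambda>p q. bu p (T q)) m)))) (hit x2 (T x5))) r3) r2) r1) x"
    by (simp add: N2 FR copTED_K Tbu bul_assoc)
  also have "\<dots> = D (\<lambda>p a3. D (\<lambda>a1 a2. f (bu a1 (T a3)) (S a2)) p) x"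
    by (simp add: N2 FR antiR_bu S_hitT bul_assoc)
  finally show ?thesis .
qed

end

context ydph begin

lemma t_L1: "trilin sc f \<Longrightarrow> lin sc sc g \<Longrightarrow> lin sc (*) (\<lambda>z. f (g z) b c)"
  unfolding trilin_def by (rule lin_comp[of _ _ g]) auto
lemma t_L2: "trilin sc f \<Longrightarrow> lin sc sc g \<Longrightarrow> lin sc (*) (\<lambda>z. f a (g z) c)"
  unfolding trilin_def by (rule lin_comp[of _ _ g]) auto
lemma t_L3: "trilin sc f \<Longrightarrow> lin sc sc g \<Longrightarrow> lin sc (*) (\<lambda>z. f a b (g z))"
  unfolding trilin_def by (rule lin_comp[of _ _ g]) auto
lemma t_p1: "trilin sc f \<Longrightarrow> f (D F x) b c = D (\<lambda>a' b'. f (F a' b') b c) x"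
  by (rule swsum_pull[OF t_L1[OF _ L_id]])
lemma t_p2: "trilin sc f \<Longrightarrow> f a (D F x) c = D (\<lambda>a' b'. f a (F a' b') c) x"
  by (rule swsum_pull[OF t_L2[OF _ L_id]])
lemma t_p3: "trilin sc f \<Longrightarrow> f a b (D F x) = D (\<lambda>a' b'. f a b (F a' b')) x"
  by (rule swsum_pull[OF t_L3[OF _ L_id]])
lemma t_s1: "trilin sc f \<Longrightarrow> f (sc k x) b c = k * f x b c"
  by (rule lin_scaleD[OF t_L1[OF _ L_id]])
lemma t_s2: "trilin sc f \<Longrightarrow> f a (sc k x) c = k * f a x c"
  by (rule lin_scaleD[OF t_L2[OF _ L_id]])
lemma t_s3: "trilin sc f \<Longrightarrow> f a b (sc k x) = k * f a b x"
  by (rule lin_scaleD[OF t_L3[OF _ L_id]])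
lemmas tR = t_L1 t_L2 t_L3 t_p1 t_p2 t_p3 t_s1 t_s2 t_s3

lemmas CONV = adL_def cop3_def swsum_def swsum2_def sum_list_map_concat split_def o_def

lemma ad_lin: "lin sc (*) (\<lambda>z. sum_list (map (\<lambda>(a, b). f a b) (ad z)))" if f: "bilin sc sc (*) f"
proof -
  have "lin sc (*) (\<lambda>z. D (\<lambda>p a3. D (\<lambda>a1 a2. f (bu a1 (T a3)) a2) p) z)"
    by (simp add: LR fR[OF f])
  moreover have "sum_list (map (\<lambda>(a, b). f a b) (ad z)) = D (\<lambda>p a3. D (\<lambda>a1 a2. f (bu a1 (T a3)) a2) p) z" for z
    by (simp add: CONV)
  ultimately show ?thesis by simp
qed

lemma I4: "tlin2 sc ad"
  unfolding tlin2_def teq2_def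
proof (intro conjI allI impI)
  fix x y :: 'h and f :: "'h \<Rightarrow> 'h \<Rightarrow> 'k" assume f: "bilin sc sc (*) f"
  show "sum_list (map (\<lambda>(a, b). f a b) (ad (x + y))) = sum_list (map (\<lambda>(a, b). f a b) (ad x @ ad y))"
    using ad_lin[OF f] unfolding lin_def by simp
next
  fix c :: 'k and x :: 'h and f :: "'h \<Rightarrow> 'h \<Rightarrow> 'k" assume f: "bilin sc sc (*) f"
  have "sum_list (map (\<lambda>(a, b). f a b) (map (\<lambda>(a, b). (sc c a, b)) (ad x))) = sum_list (map (\<lambda>(a, b). c * f a b) (ad x))"
    using f unfolding bilin_def lin_def by (simp add: split_def o_def)
  also have "\<dots> = c * sum_list (map (\<lambda>(a, b). f a b) (ad x))"
    by (simp add: split_def sum_list_const_mult)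
  also have "\<dots> = sum_list (map (\<lambda>(a, b). f a b) (ad (sc c x)))"
    using ad_lin[OF f] unfolding lin_def by simp
  finally show "sum_list (map (\<lambda>(a, b). f a b) (ad (sc c x))) = sum_list (map (\<lambda>(a, b). f a b) (map (\<lambda>(a, b). (sc c a, b)) (ad x)))"
    by simp
qed

lemma I5: "teq3 sc [(m1, m2, v0). (m, v0) \<leftarrow> ad v, (m1, m2) \<leftarrow> cop m] [(m, n, w). (m, v0) \<leftarrow> ad v, (n, w) \<leftarrow> ad v0]"
  unfolding teq3_def
proof (intro allI impI)
  fix f :: "'h \<Rightarrow> 'h \<Rightarrow> 'h \<Rightarrow> 'k" assume f: "trilin sc f"
  note FR = tR[OF f]
  have "sum_list (map (\<lambda>(a, b, c). f a b c) [(m1, m2, v0). (m, v0) \<leftarrow> ad v, (m1, m2) \<leftarrow> cop m])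
     = D (\<lambda>p a3. D (\<lambda>a1 a2. D (\<lambda>m1 m2. f m1 m2 a2) (bu a1 (T a3))) p) v" by (simp add: CONV)
  also have "\<dots> = D (\<lambda>p a3. D (\<lambda>a1 a2. D (\<lambda>q b3. D (\<lambda>b1 b2. f (bu a1 (T a3)) (bu b1 (T b3)) b2) q) a2) p) v"
    by (simp add: N2 FR copbul_K copbulE_K copT_K copTED_K)
  also have "\<dots> = sum_list (map (\<lambda>(a, b, c). f a b c) [(m, n, w). (m, v0) \<leftarrow> ad v, (n, w) \<leftarrow> ad v0])"
    by (simp add: CONV)
  finally show "sum_list (map (\<lambda>(a, b, c). f a b c) [(m1, m2, v0). (m, v0) \<leftarrow> ad v, (m1, m2) \<leftarrow> cop m])
     = sum_list (map (\<lambda>(a, b, c). f a b c) [(m, n, w). (m, v0) \<leftarrow> ad v, (n, w) \<leftarrow> ad v0])" .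
qed

lemma I6: "sum_list (map (\<lambda>(m, v0). sc (eps m) v0) (ad v)) = v"
proof -
  have "sum_list (map (\<lambda>(m, v0). sc (eps m) v0) (ad v)) = D (\<lambda>p a3. D (\<lambda>a1 a2. sc (eps (bu a1 (T a3))) a2) p) v"
    by (simp add: CONV)
  also have "\<dots> = v" by (simp add: NORM)
  finally show ?thesis .
qed

lemma I7: "teq2 sc (ad (hit a v)) [(bu (bu a1 m) (T a3), hit a2 v0). (a1, a2, a3) \<leftarrow> cop3 cop a, (m, v0) \<leftarrow> ad v]"
  unfolding teq2_def
proof (intro allI impI)
  fix f :: "'h \<Rightarrow> 'h \<Rightarrow> 'k" assume f: "bilin sc sc (*) f"
  have "sum_list (map (\<lambda>(a, b). f a b) (ad (hit a v))) = D (\<lambda>p a3. D (\<lambda>a1 a2. f (bu a1 (T a3)) a2) p) (hit a v)"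
    by (simp add: CONV)
  also have "\<dots> = D (\<lambda>p a3. D (\<lambda>a1 a2. E (\<lambda>q v3. E (\<lambda>v1 v2. f (bu (bu a1 (bu v1 (T v3))) (T a3)) (hit a2 v2)) q) v) p) a"
    by (rule A7_core[OF f])
  also have "\<dots> = sum_list (map (\<lambda>(a, b). f a b) [(bu (bu a1 m) (T a3), hit a2 v0). (a1, a2, a3) \<leftarrow> cop3 cop a, (m, v0) \<leftarrow> ad v])"
    by (simp add: CONV)
  finally show "sum_list (map (\<lambda>(a, b). f a b) (ad (hit a v))) = sum_list (map (\<lambda>(a, b). f a b) [(bu (bu a1 m) (T a3), hit a2 v0). (a1, a2, a3) \<leftarrow> cop3 cop a, (m, v0) \<leftarrow> ad v])" .
qed

lemma YDM: "ll_yd_module sc bu u cop eps T hit ad"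
  unfolding ll_yd_module_def using bil_hit P2 I4 I5 I6 I7 by simp

lemma H7: "teq2 sc (ad (mul x y)) [(bu m n, mul x0 y0). (m, x0) \<leftarrow> ad x, (n, y0) \<leftarrow> ad y]"
  unfolding teq2_def
proof (intro allI impI)
  fix f :: "'h \<Rightarrow> 'h \<Rightarrow> 'k" assume f: "bilin sc sc (*) f"
  have "sum_list (map (\<lambda>(a, b). f a b) (ad (mul x y))) = D (\<lambda>p a3. D (\<lambda>a1 a2. f (bu a1 (T a3)) a2) p) (mul x y)"
    by (simp add: CONV)
  also have "\<dots> = D (\<lambda>p a3. D (\<lambda>a1 a2. E (\<lambda>q b3. E (\<lambda>b1 b2. f (bu (bu a1 (T a3)) (bu b1 (T b3))) (mul a2 b2)) q) y) p) x"
    by (rule B7_core[OF f])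
  also have "\<dots> = sum_list (map (\<lambda>(a, b). f a b) [(bu m n, mul x0 y0). (m, x0) \<leftarrow> ad x, (n, y0) \<leftarrow> ad y])"
    by (simp add: CONV)
  finally show "sum_list (map (\<lambda>(a, b). f a b) (ad (mul x y))) = sum_list (map (\<lambda>(a, b). f a b) [(bu m n, mul x0 y0). (m, x0) \<leftarrow> ad x, (n, y0) \<leftarrow> ad y])" .
qed

lemma H8: "teq2 sc (ad u) [(u, u)]"
  unfolding teq2_def
proof (intro allI impI)
  fix f :: "'h \<Rightarrow> 'h \<Rightarrow> 'k" assume f: "bilin sc sc (*) f"
  have "sum_list (map (\<lambda>(a, b). f a b) (ad u)) = D (\<lambda>p a3. D (\<lambda>a1 a2. f (bu a1 (T a3)) a2) p) u"
    by (simp add: CONV)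
  also have "\<dots> = f u u"
    by (subst D_u_K, simp_all add: LR fR[OF f], subst D_u_K, simp_all add: LR fR[OF f])
  finally show "sum_list (map (\<lambda>(a, b). f a b) (ad u)) = sum_list (map (\<lambda>(a, b). f a b) [(u, u)])" by simp
qed

lemma H9: "teq3 sc [(m, c1, c2). (m, c) \<leftarrow> ad x, (c1, c2) \<leftarrow> cop c]
                    [(bu m n, a0, b0). (a, b) \<leftarrow> cop x, (m, a0) \<leftarrow> ad a, (n, b0) \<leftarrow> ad b]"
  unfolding teq3_def
proof (intro allI impI)
  fix f :: "'h \<Rightarrow> 'h \<Rightarrow> 'h \<Rightarrow> 'k" assume f: "trilin sc f"
  note FR = tR[OF f]
  have "sum_list (map (\<lambda>(a, b, c). f a b c) [(m, c1, c2). (m, c) \<leftarrow> ad x, (c1, c2) \<leftarrow> cop c])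
     = D (\<lambda>p a3. D (\<lambda>a1 a2. D (\<lambda>c1 c2. f (bu a1 (T a3)) c1 c2) a2) p) x" by (simp add: CONV)
  also have "\<dots> = D (\<lambda>x1 r1. D (\<lambda>x2 r2. D (\<lambda>m r3. D (\<lambda>x5 x6. f (bu x1 (bu (D (\<lambda>p q. bu (T p) q) m) (T x6))) x2 x5) r3) r2) r1) x"
    by (simp add: N2 FR antiL_bu)
  also have "\<dots> = D (\<lambda>a b. D (\<lambda>p a3. D (\<lambda>a1 a2. D (\<lambda>q b3. D (\<lambda>b1 b2. f (bu (bu a1 (T a3)) (bu b1 (T b3))) a2 b2) q) b) p) a) x"
    by (simp add: N2 FR bul_assoc)
  also have "\<dots> = sum_list (map (\<lambda>(a, b, c). f a b c) [(bu m n, a0, b0). (a, b) \<leftarrow> cop x, (m, a0) \<leftarrow> ad a, (n, b0) \<leftarrow> ad b])"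
    by (simp add: CONV)
  finally show "sum_list (map (\<lambda>(a, b, c). f a b c) [(m, c1, c2). (m, c) \<leftarrow> ad x, (c1, c2) \<leftarrow> cop c])
     = sum_list (map (\<lambda>(a, b, c). f a b c) [(bu m n, a0, b0). (a, b) \<leftarrow> cop x, (m, a0) \<leftarrow> ad a, (n, b0) \<leftarrow> ad b])" .
qed

lemma H10: "sum_list (map (\<lambda>(m, c). sc (eps c) m) (ad x)) = sc (eps x) u"
proof -
  have "sum_list (map (\<lambda>(m, c). sc (eps c) m) (ad x)) = D (\<lambda>p a3. D (\<lambda>a1 a2. sc (eps a2) (bu a1 (T a3))) p) x"
    by (simp add: CONV)
  also have "\<dots> = D (\<lambda>a1 a3. bu a1 (T a3)) x" by (simp add: NORM)
  also have "\<dots> = sc (eps x) u" by (rule antiR_bu)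
  finally show ?thesis .
qed

lemma H12: "teq2 sc (cop (mul x y)) [(mul x1 (hit m y1), mul x20 y2). (x1, x2) \<leftarrow> cop x, (m, x20) \<leftarrow> ad x2, (y1, y2) \<leftarrow> cop y]"
  unfolding teq2_def
proof (intro allI impI)
  fix f :: "'h \<Rightarrow> 'h \<Rightarrow> 'k" assume f: "bilin sc sc (*) f"
  note FR = fR[OF f]
  have "sum_list (map (\<lambda>(a, b). f a b) (cop (mul x y))) = D f (mul x y)" by (simp add: swsum_def split_def)
  also have "\<dots> = D (\<lambda>x1 x2. D (\<lambda>p a3. D (\<lambda>a1 a2. E (\<lambda>y1 y2. f (mul x1 (hit (bu a1 (T a3)) y1)) (mul a2 y2)) y) p) x2) x"
    by (simp add: N2 FR copmul_K P2[symmetric])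
  also have "\<dots> = sum_list (map (\<lambda>(a, b). f a b) [(mul x1 (hit m y1), mul x20 y2). (x1, x2) \<leftarrow> cop x, (m, x20) \<leftarrow> ad x2, (y1, y2) \<leftarrow> cop y])"
    by (simp add: CONV)
  finally show "sum_list (map (\<lambda>(a, b). f a b) (cop (mul x y))) = sum_list (map (\<lambda>(a, b). f a b) [(mul x1 (hit m y1), mul x20 y2). (x1, x2) \<leftarrow> cop x, (m, x20) \<leftarrow> ad x2, (y1, y2) \<leftarrow> cop y])" .
qed

lemma H15: "teq2 sc (ad (S x)) [(m, S c). (m, c) \<leftarrow> ad x]"
  unfolding teq2_def
proof (intro allI impI)
  fix f :: "'h \<Rightarrow> 'h \<Rightarrow> 'k" assume f: "bilin sc sc (*) f"
  have "sum_list (map (\<lambda>(a, b). f a b) (ad (S x))) = D (\<lambda>p a3. D (\<lambda>a1 a2. f (bu a1 (T a3)) a2) p) (S x)"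
    by (simp add: CONV)
  also have "\<dots> = D (\<lambda>p a3. D (\<lambda>a1 a2. f (bu a1 (T a3)) (S a2)) p) x" by (rule B15_core[OF f])
  also have "\<dots> = sum_list (map (\<lambda>(a, b). f a b) [(m, S c). (m, c) \<leftarrow> ad x])" by (simp add: CONV)
  finally show "sum_list (map (\<lambda>(a, b). f a b) (ad (S x))) = sum_list (map (\<lambda>(a, b). f a b) [(m, S c). (m, c) \<leftarrow> ad x])" .
qed

lemma HM: "hopf_monoid_in_yd sc bu u cop eps hit ad mul u cop eps S"
  unfolding hopf_monoid_in_yd_def
  using alg coalg P1 hitu cop_hit eps_hit H7 H8 H9 H10 eps_mul eps_u cop_u H12 lin_S S_hit H15 antiR antiL
  by simp

lemma BR: "teq2 sc [(hit m b, a0). (m, a0) \<leftarrow> ad a] [(hit a1 (\<beta> a3 b), a2). (a1, a2, a3) \<leftarrow> cop3 cop a]"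
proof -
  have "[(hit m b, a0). (m, a0) \<leftarrow> ad a] = [(hit a1 (\<beta> a3 b), a2). (a1, a2, a3) \<leftarrow> cop3 cop a]"
    by (simp add: adL_def o_def split_def P2[symmetric])
  then show ?thesis unfolding teq2_def by simp
qed

lemma main: "ll_yd_module sc bu u cop eps T hit ad
    \<and> hopf_monoid_in_yd sc bu u cop eps hit ad mul u cop eps S
    \<and> (\<forall>a b. teq2 sc [(hit m b, a0). (m, a0) \<leftarrow> ad a] [(hit a1 (\<beta> a3 b), a2). (a1, a2, a3) \<leftarrow> cop3 cop a])"
  using YDM HM BR by blast

end

theorem theorem3:
  fixes sc :: "'k::field \<Rightarrow> 'h::ab_group_add \<Rightarrow> 'h"
    and mul :: "'h \<Rightarrow> 'h \<Rightarrow> 'h" and u :: 'h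
    and cop :: "'h \<Rightarrow> ('h \<times> 'h) list" and eps :: "'h \<Rightarrow> 'k"
    and S :: "'h \<Rightarrow> 'h" and hit :: "'h \<Rightarrow> 'h \<Rightarrow> 'h" and \<beta> :: "'h \<Rightarrow> 'h \<Rightarrow> 'h"
  assumes "yd_post_hopf sc mul u cop eps S hit \<beta>"
  shows "ll_yd_module sc (bul mul cop hit) u cop eps (Sh cop S \<beta>) hit (adL mul cop S hit \<beta>)
    \<and> hopf_monoid_in_yd sc (bul mul cop hit) u cop eps hit (adL mul cop S hit \<beta>) mul u cop eps S
    \<and> (\<forall>a b. teq2 sc [(hit m b, a0). (m, a0) \<leftarrow> adL mul cop S hit \<beta> a]
                       [(hit a1 (\<beta> a3 b), a2). (a1, a2, a3) \<leftarrow> cop3 cop a])"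
proof -
  interpret ydph sc mul u cop eps S hit \<beta> by unfold_locales (fact assms)
  show ?thesis by (rule main)
qed

end
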